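(* Let $\alpha\in(0,2)$. There exists a sequence $\{f_n\}_{n\ge1}\subset W^{1,\infty}(\mathbb{T}^2)$ of zero-average functions, bounded in $L^1(\mathbb{T}^2)$, and a constant $C>0$ such that $$\sup_{n\ge1}\mathbb{M}_{f_n}(r)\le Cr^\alpha\qquad\forall r\in(0,1),$$ and $$\lim_{n\to\infty}\|f_n\|_{L^2}=\infty,\qquad 0<\liminf_{n\to\infty}S_n\le\limsup_{n\to\infty}S_n<\infty,\qquad\text{where } S_n:=\frac{\|f_n\|_{L^2}^{\frac{4-\alpha}{2-\alpha}}}{\|\nabla f_n\|_{L^2}}.$$
   Context: $\mathbb{T}^2$ is the two-dimensional flat torus. For $f\in L^1(\mathbb{T}^2)$, $\mathbb{M}_f(r):=\sup_{x\in\mathbb{T}^2}\int_{B_r(x)}|f(y)|\,dy$, where $B_r(x)$ is the ball of radius $r$ in $\mathbb{T}^2$. *)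

theory Defs
  imports "HOL-Analysis.Analysis"
begin

text \<open>The flat torus T^2 is modelled as R^2 / Z^2: functions on T^2 are
  Z^2-periodic functions on R^2, and integrals over T^2 are integrals over
  the unit cell [0,1]^2.\<close>

definition cell :: "(real^2) set" where
  "cell = cbox 0 One"

definition periodic2 :: "(real^2 \<Rightarrow> 'b) \<Rightarrow> bool" where
  "periodic2 f \<longleftrightarrow> (\<forall>x i. f (x + axis i 1) = f x)"

definition tdist :: "real^2 \<Rightarrow> real^2 \<Rightarrow> real" where
  "tdist x y = Inf {norm (x - y - k) | k :: real^2. \<forall>i. k $ i \<in> \<int>}"

definition tball :: "real^2 \<Rightarrow> real \<Rightarrow> (real^2) set" where
  "tball x r = {y \<in> cell. tdist x y < r}"

definition tint :: "(real^2 \<Rightarrow> real) \<Rightarrow> real" where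
  "tint f = integral\<^sup>L (lebesgue_on cell) f"

definition L1norm :: "(real^2 \<Rightarrow> real) \<Rightarrow> real" where
  "L1norm f = tint (\<lambda>y. \<bar>f y\<bar>)"

definition L2norm :: "(real^2 \<Rightarrow> real) \<Rightarrow> real" where
  "L2norm f = sqrt (tint (\<lambda>y. (f y)\<^sup>2))"

definition L2norm_vec :: "(real^2 \<Rightarrow> real^2) \<Rightarrow> real" where
  "L2norm_vec G = sqrt (tint (\<lambda>y. (norm (G y))\<^sup>2))"

definition maxint :: "(real^2 \<Rightarrow> real) \<Rightarrow> real \<Rightarrow> real" where
  "maxint f r = (SUP x. integral\<^sup>L (lebesgue_on (tball x r)) (\<lambda>y. \<bar>f y\<bar>))"

definition ess_bounded :: "(real^2 \<Rightarrow> real) \<Rightarrow> bool" where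
  "ess_bounded f \<longleftrightarrow> (\<exists>B. AE y in lebesgue_on cell. \<bar>f y\<bar> \<le> B)"

definition C1_periodic :: "(real^2 \<Rightarrow> real) \<Rightarrow> (2 \<Rightarrow> real^2 \<Rightarrow> real) \<Rightarrow> bool" where
  "C1_periodic \<phi> P \<longleftrightarrow> periodic2 \<phi> \<and>
     (\<forall>x. (\<phi> has_derivative (\<lambda>h. \<Sum>i\<in>UNIV. P i x * h $ i)) (at x)) \<and>
     (\<forall>i. continuous_on UNIV (P i))"

definition weak_gradient :: "(real^2 \<Rightarrow> real) \<Rightarrow> (real^2 \<Rightarrow> real^2) \<Rightarrow> bool" where
  "weak_gradient f G \<longleftrightarrow>
     (\<forall>i. integrable (lebesgue_on cell) (\<lambda>y. G y $ i)) \<and>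
     (\<forall>\<phi> P. C1_periodic \<phi> P \<longrightarrow>
        (\<forall>i. tint (\<lambda>y. f y * P i y) = - tint (\<lambda>y. G y $ i * \<phi> y)))"

definition W1inf :: "(real^2 \<Rightarrow> real) \<Rightarrow> (real^2 \<Rightarrow> real^2) \<Rightarrow> bool" where
  "W1inf f G \<longleftrightarrow> periodic2 f \<and> periodic2 G \<and>
     f \<in> borel_measurable lebesgue \<and> G \<in> borel_measurable lebesgue \<and>
     ess_bounded f \<and> (\<forall>i. ess_bounded (\<lambda>y. G y $ i)) \<and> weak_gradient f G"

end

theory Submission
  imports Defs
begin

definition v2 :: "real \<Rightarrow> real \<Rightarrow> real^2" where "v2 s t = vector [s,t]"

lemma v2_nth [simp]: "v2 s t $ 1 = s" "v2 s t $ 2 = t"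
  by (simp_all add: v2_def)

lemma v2_alt: "v2 s t = s *\<^sub>R axis 1 1 + t *\<^sub>R axis 2 1"
  by (simp add: v2_def vec_eq_iff forall_2 vector_def axis_def)

lemma One2 [simp]: "(One::real^2) $ i = 1"
proof -
  have "One \<bullet> axis i (1::real) = 1" by (simp add: inner_sum_Basis)
  then show ?thesis by (simp add: cart_eq_inner_axis)
qed

lemma v2_eta: "v2 (y$1) (y$2) = y"
  by (simp add: v2_def vec_eq_iff forall_2 vector_def)

lemma v2_image_cbox: "(\<lambda>p. v2 (fst p) (snd p)) ` cbox (a,c) (b,d) = cbox (v2 a c) (v2 b d)"
proof -
  have "y \<in> (\<lambda>p. v2 (fst p) (snd p)) ` cbox (a,c) (b,d)" if "y \<in> cbox (v2 a c) (v2 b d)" for y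
  proof -
    have "y = v2 (y$1) (y$2)" by (simp add: v2_eta)
    moreover have "(y$1, y$2) \<in> cbox (a,c) (b,d)" using that
      by (auto simp: mem_box_cart cbox_Pair_eq forall_2)
    ultimately show ?thesis by force
  qed
  moreover have "(\<lambda>p. v2 (fst p) (snd p)) ` cbox (a,c) (b,d) \<subseteq> cbox (v2 a c) (v2 b d)"
    by (auto simp: mem_box_cart cbox_Pair_eq forall_2)
  ultimately show ?thesis by blast
qed

lemma content_v2: "measure lborel ((\<lambda>p. v2 (fst p) (snd p)) ` cbox u v) = 1 * measure lborel (cbox u v)"
proof -
  obtain a c where u: "u = (a,c)" by (cases u)
  obtain b d where v: "v = (b,d)" by (cases v)
  have e: "cbox (v2 a c) (v2 b d) = {} \<longleftrightarrow> \<not> (a \<le> b \<and> c \<le> d)"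
    by (simp add: mem_box_cart forall_2 set_eq_iff) (metis order_trans order_refl v2_nth)
  have "measure lborel (cbox (v2 a c) (v2 b d)) = measure lborel (cbox a b) * measure lborel (cbox c d)"
    by (simp add: content_cbox_if_cart e UNIV_2)
  then show ?thesis
    unfolding u v v2_image_cbox content_Pair by simp
qed

lemma integral_cart2:
  fixes F :: "real^2 \<Rightarrow> real"
  assumes "continuous_on (cbox a b) F"
  shows "integral (cbox a b) F = integral {a$1..b$1} (\<lambda>s. integral {a$2..b$2} (\<lambda>t. F (v2 s t)))"
proof -
  let ?g = "\<lambda>p. v2 (fst p) (snd p)"
  let ?h = "\<lambda>y::real^2. (y$1, y$2)"
  have hc: "?h ` cbox a b = cbox (a$1,a$2) (b$1,b$2)"
  proof -
    have "?h ` cbox (v2 (a$1) (a$2)) (v2 (b$1) (b$2)) = cbox (a$1,a$2) (b$1,b$2)"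
      unfolding v2_image_cbox[symmetric] image_comp by (simp add: o_def)
    then show ?thesis by (simp add: v2_eta)
  qed
  have g1: "\<exists>w z. ?g ` cbox u v = cbox w z" for u v
  proof -
    have "?g ` cbox (fst u, snd u) (fst v, snd v) = cbox (v2 (fst u) (snd u)) (v2 (fst v) (snd v))"
      by (rule v2_image_cbox)
    then show ?thesis by auto
  qed
  have h1: "\<exists>w z. ?h ` cbox u v = cbox w z" for u v :: "real^2"
  proof -
    have "?h ` cbox (v2 (u$1) (u$2)) (v2 (v$1) (v$2)) = cbox (u$1,u$2) (v$1,v$2)"
      unfolding v2_image_cbox[symmetric] image_comp by (simp add: o_def)
    then have "?h ` cbox u v = cbox (u$1,u$2) (v$1,v$2)" by (simp add: v2_eta)
    then show ?thesis by blast
  qed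
  have cg: "continuous (at x) ?g" for x
    unfolding v2_alt by (intro continuous_intros) 
  have "((\<lambda>p. F (?g p)) has_integral (1/1) *\<^sub>R integral (cbox a b) F) (?h ` cbox a b)"
  proof (rule has_integral_twiddle[where r=1])
    show "(F has_integral integral (cbox a b) F) (cbox a b)"
      using integrable_continuous[OF assms] by blast
    show "\<And>x. ?h (?g x) = x" by simp
    show "\<And>x. ?g (?h x) = x" by (simp add: v2_eta)
    show "0 < (1::real)" by simp
    show "\<And>x. continuous (at x) ?g" by (rule cg)
    show "\<And>u v. \<exists>w z. ?g ` cbox u v = cbox w z" by (rule g1)
    show "\<And>u v. \<exists>w z. ?h ` cbox u v = cbox w z" by (rule h1)
    show "\<And>u v. measure lborel (?g ` cbox u v) = 1 * measure lborel (cbox u v)" by (rule content_v2)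
  qed
  then have "((\<lambda>p. F (?g p)) has_integral integral (cbox a b) F) (cbox (a$1,a$2) (b$1,b$2))"
    unfolding hc by simp
  then have "integral (cbox (a$1,a$2) (b$1,b$2)) (\<lambda>p. F (?g p)) = integral (cbox a b) F"
    by (rule integral_unique)
  moreover have "continuous_on (cbox (a$1,a$2) (b$1,b$2)) (\<lambda>p. F (?g p))"
  proof (rule continuous_on_compose2[OF assms])
    show "continuous_on (cbox (a$1,a$2) (b$1,b$2)) ?g"
      by (intro continuous_at_imp_continuous_on ballI cg)
    show "?g ` cbox (a$1,a$2) (b$1,b$2) \<subseteq> cbox a b"
      by (simp add: v2_image_cbox v2_eta)
  qed
  ultimately show ?thesis
    using integral_prod_continuous[of "a$1" "a$2" "b$1" "b$2" "\<lambda>p. F (?g p)"] by (simp add: cbox_interval)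
qed

lemma integral_cart2_prod:
  fixes g h :: "real \<Rightarrow> real" and a b :: "real^2"
  assumes "continuous_on UNIV g" "continuous_on UNIV h"
  shows "integral (cbox a b) (\<lambda>y. g (y$1) * h (y$2)) = integral {a$1..b$1} g * integral {a$2..b$2} h"
proof -
  have c: "continuous_on (cbox a b) (\<lambda>y::real^2. g (y$1) * h (y$2))"
    by (intro continuous_intros continuous_on_compose2[OF assms(1)] continuous_on_compose2[OF assms(2)]) auto
  show ?thesis
    unfolding integral_cart2[OF c] by simp
qed

lemma tint_eq:
  assumes "continuous_on cell F"
  shows "tint F = integral cell F"
  unfolding tint_def cell_def
  by (rule lebesgue_integral_eq_integral) (use assms continuous_imp_integrable in \<open>auto simp: cell_def\<close>)

lemma tint_prod:
  fixes g h :: "real \<Rightarrow> real"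
  assumes "continuous_on UNIV g" "continuous_on UNIV h"
  shows "tint (\<lambda>y. g (y$1) * h (y$2)) = integral {0..1} g * integral {0..1} h"
proof -
  have c: "continuous_on cell (\<lambda>y::real^2. g (y$1) * h (y$2))"
    by (intro continuous_intros continuous_on_compose2[OF assms(1)] continuous_on_compose2[OF assms(2)]) auto
  show ?thesis
    unfolding tint_eq[OF c] unfolding cell_def integral_cart2_prod[OF assms] by (simp only: One2 zero_index)
qed

lemma maxpow_deriv:
  fixes x :: real
  assumes "n \<ge> 1"
  shows "((\<lambda>x::real. (max 0 x)^(Suc n)) has_real_derivative (Suc n) * (max 0 x)^n) (at x)"
proof (cases "x = 0")
  case False
  show ?thesis
  proof (cases "x > 0")
    case True
    have d: "((\<lambda>x::real. x^(Suc n)) has_real_derivative (Suc n) * x^n) (at x)"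
      using DERIV_pow[of "Suc n" x] by simp
    have "eventually (\<lambda>y. y \<in> {0<..}) (nhds x)"
      using True by (intro eventually_nhds_in_open) auto
    then have ev: "eventually (\<lambda>y. (max 0 y)^(Suc n) = y^(Suc n)) (nhds x)"
      by eventually_elim auto
    show ?thesis
      using d True by (subst DERIV_cong_ev[OF refl ev]) auto
  next
    case False
    then have xn: "x < 0" using \<open>x \<noteq> 0\<close> by auto
    have "eventually (\<lambda>y. y \<in> {..<0}) (nhds x)"
      using xn by (intro eventually_nhds_in_open) auto
    then have ev: "eventually (\<lambda>y. (max 0 y)^(Suc n) = 0) (nhds x)"
      by eventually_elim auto
    show ?thesis
      using xn assms by (subst DERIV_cong_ev[OF refl ev]) (auto simp: zero_power)
  qed
next
  case True
  have lim0: "((\<lambda>y::real. \<bar>y\<bar>^n) \<longlongrightarrow> 0) (at 0)"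
  proof -
    have "((\<lambda>y::real. \<bar>y\<bar>^n) \<longlongrightarrow> \<bar>0\<bar>^n) (at 0)"
      by (intro tendsto_intros)
    moreover have "\<bar>0::real\<bar>^n = 0" using assms by (simp add: zero_power)
    ultimately show ?thesis by (simp only:)
  qed
  have "((\<lambda>y. ((max 0 y)^(Suc n) - (max 0 0)^(Suc n)) / (y - 0)) \<longlongrightarrow> 0) (at (0::real))"
  proof (rule Lim_null_comparison[OF _ lim0])
    show "\<forall>\<^sub>F y in at 0. norm (((max 0 y)^(Suc n) - (max 0 0)^(Suc n)) / (y - 0)) \<le> \<bar>y\<bar>^n"
    proof (rule always_eventually, intro allI)
      fix y :: real
      show "norm (((max 0 y)^(Suc n) - (max 0 0)^(Suc n)) / (y - 0)) \<le> \<bar>y\<bar>^n"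
      proof (cases "y > 0")
        case True
        then show ?thesis by (simp add: abs_mult power_abs)
      next
        case False
        then show ?thesis by simp
      qed
    qed
  qed
  then show ?thesis
    using True assms by (simp add: has_field_derivative_iff zero_power)
qed

definition bq :: "real \<Rightarrow> real" where "bq s = max 0 (s - s^2)"
definition bPhi :: "real \<Rightarrow> real" where "bPhi s = (bq s)^3"
definition bpsi :: "real \<Rightarrow> real" where "bpsi s = 3 * (bq s)^2 * (1 - 2 * s)"
definition bdpsi :: "real \<Rightarrow> real" where "bdpsi s = 6 * bq s * (1 - 2 * s)^2 - 6 * (bq s)^2"

lemma bPhi_deriv: "(bPhi has_real_derivative bpsi s) (at s)"
proof -
  have h: "((\<lambda>s. s - s^2) has_real_derivative (1 - 2 * s)) (at s)"
    by (auto intro!: derivative_eq_intros)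
  have "((\<lambda>s. (max 0 (s - s^2))^(Suc 2)) has_real_derivative (Suc 2) * (max 0 (s - s^2))^2 * (1 - 2 * s)) (at s)"
    using DERIV_chain2[OF maxpow_deriv h, of 2] by simp
  then show ?thesis unfolding bPhi_def bpsi_def bq_def by (simp add: mult.assoc)
qed

lemma ftc_real:
  fixes F f :: "real \<Rightarrow> real"
  assumes "a \<le> b" "\<And>x. (F has_real_derivative f x) (at x)"
  shows "(f has_integral (F b - F a)) {a..b}"
proof (rule fundamental_theorem_of_calculus[OF assms(1)])
  fix x assume "x \<in> {a..b}"
  show "(F has_vector_derivative f x) (at x within {a..b})"
    using assms(2)[of x] by (simp add: has_real_derivative_iff_has_vector_derivative has_vector_derivative_at_within)
qed

lemma per_local:
  fixes N \<delta> c t :: real and X :: "real \<Rightarrow> real"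
  assumes "0 < \<delta>" "\<delta> < 1" "0 < N" "\<And>s. s \<le> 0 \<Longrightarrow> X s = 0" "\<And>s. s \<ge> 1 \<Longrightarrow> X s = c"
  shows "\<forall>\<^sub>F t' in nhds t. c * of_int \<lfloor>N*t'\<rfloor> + X (frac (N*t') / \<delta>)
            = c * of_int \<lfloor>N*t\<rfloor> + X ((N*t' - of_int \<lfloor>N*t\<rfloor>) / \<delta>)"
proof -
  define k where "k = \<lfloor>N*t\<rfloor>"
  define U where "U = {(of_int k - 1 + \<delta>)/N <..< (of_int k + 1)/N}"
  have kt: "of_int k \<le> N*t" "N*t < of_int k + 1" unfolding k_def by linarith+
  have "t \<in> U" unfolding U_def using kt assms by (auto simp: field_simps)
  then have ev: "\<forall>\<^sub>F t' in nhds t. t' \<in> U" unfolding U_def by (intro eventually_nhds_in_open) auto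
  show ?thesis unfolding k_def[symmetric]
  proof (rule eventually_mono[OF ev])
    fix t' assume "t' \<in> U"
    then have t': "of_int k - 1 + \<delta> < N*t'" "N*t' < of_int k + 1" unfolding U_def using assms
      by (auto simp: field_simps)
    show "c * of_int \<lfloor>N*t'\<rfloor> + X (frac (N*t') / \<delta>) = c * of_int k + X ((N*t' - of_int k) / \<delta>)"
    proof (cases "N*t' \<ge> of_int k")
      case True
      then have "\<lfloor>N*t'\<rfloor> = k" using t' by (simp add: floor_eq_iff)
      then show ?thesis by (simp add: frac_def)
    next
      case False
      then have fl: "\<lfloor>N*t'\<rfloor> = k - 1" using t' assms by (simp add: floor_eq_iff)
      have "frac (N*t') / \<delta> \<ge> 1" using t' assms fl by (simp add: frac_def field_simps)
      moreover have "(N*t' - of_int k) / \<delta> \<le> 0" using False assms by (simp add: divide_nonpos_pos)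
      ultimately have "X (frac (N*t') / \<delta>) = c" "X ((N*t' - of_int k) / \<delta>) = 0" using assms by auto
      then show ?thesis unfolding fl by (simp add: algebra_simps)
    qed
  qed
qed

lemma per_deriv:
  fixes N \<delta> c t :: real and X x' :: "real \<Rightarrow> real"
  assumes "0 < \<delta>" "\<delta> < 1" "0 < N" "\<And>s. s \<le> 0 \<Longrightarrow> X s = 0" "\<And>s. s \<ge> 1 \<Longrightarrow> X s = c"
    and "\<And>s. (X has_real_derivative x' s) (at s)"
  shows "((\<lambda>t. c * of_int \<lfloor>N*t\<rfloor> + X (frac (N*t) / \<delta>)) has_real_derivative (N/\<delta>) * x' (frac (N*t)/\<delta>)) (at t)"
proof -
  define k where "k = \<lfloor>N*t\<rfloor>"
  have d: "((\<lambda>t'. c * of_int k + X ((N*t' - of_int k) / \<delta>)) has_real_derivative x' ((N*t - of_int k)/\<delta>) * (N/\<delta>)) (at t)"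
  proof -
    have "((\<lambda>t'. (N*t' - of_int k) / \<delta>) has_real_derivative N/\<delta>) (at t)"
      using assms by (auto intro!: derivative_eq_intros)
    from DERIV_add[OF DERIV_const[of "c * of_int k"] DERIV_chain2[OF assms(6) this]]
    show ?thesis by simp
  qed
  have "frac (N*t) = N*t - of_int k" by (simp add: frac_def k_def)
  then show ?thesis
    using d per_local[OF assms(1-5), where t=t]
    by (subst DERIV_cong_ev[OF refl _ refl]) (auto simp: k_def mult.commute)
qed

lemma per_cont:
  fixes N \<delta> t :: real and \<kappa> :: "real \<Rightarrow> real"
  assumes "0 < \<delta>" "\<delta> < 1" "0 < N" "\<And>s. s \<le> 0 \<Longrightarrow> \<kappa> s = 0" "\<And>s. s \<ge> 1 \<Longrightarrow> \<kappa> s = 0"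
    and "continuous_on UNIV \<kappa>"
  shows "isCont (\<lambda>t. \<kappa> (frac (N*t) / \<delta>)) t"
proof -
  have ev: "\<forall>\<^sub>F t' in nhds t. \<kappa> (frac (N*t') / \<delta>) = \<kappa> ((N*t' - of_int \<lfloor>N*t\<rfloor>) / \<delta>)"
    using per_local[OF assms(1-5), where t=t] assms by simp
  have "isCont (\<lambda>t'. \<kappa> ((N*t' - of_int \<lfloor>N*t\<rfloor>) / \<delta>)) t"
    by (rule isCont_o2[OF _ continuous_on_interior[OF assms(6)]]) (use assms(1) in \<open>auto intro!: continuous_intros\<close>)
  then show ?thesis using isCont_cong[OF ev] by simp
qed

definition Xint :: "(real \<Rightarrow> real) \<Rightarrow> real \<Rightarrow> real" where
  "Xint \<kappa> s = integral {-1..s} \<kappa>"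

lemma Xint_props:
  fixes \<kappa> :: "real \<Rightarrow> real"
  assumes "\<And>s. s \<le> 0 \<Longrightarrow> \<kappa> s = 0" "\<And>s. s \<ge> 1 \<Longrightarrow> \<kappa> s = 0"
    and c: "continuous_on UNIV \<kappa>"
  shows "\<And>s. s \<le> 0 \<Longrightarrow> Xint \<kappa> s = 0"
    and "\<And>s. s \<ge> 1 \<Longrightarrow> Xint \<kappa> s = Xint \<kappa> 1"
    and "\<And>s. (Xint \<kappa> has_real_derivative \<kappa> s) (at s)"
    and "Xint \<kappa> 1 = integral {0..1} \<kappa>"
proof -
  have int: "\<kappa> integrable_on {a..b}" for a b
    by (rule integrable_continuous_real) (use c continuous_on_subset in blast)
  show z: "Xint \<kappa> s = 0" if "s \<le> 0" for s
  proof -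
    have "integral {-1..s} \<kappa> = integral {-1..s} (\<lambda>_::real. 0::real)"
      by (rule Henstock_Kurzweil_Integration.integral_cong) (use assms(1) that in auto)
    then show ?thesis by (simp add: Xint_def)
  qed
  show "Xint \<kappa> s = Xint \<kappa> 1" if "s \<ge> 1" for s
  proof -
    have "integral {1..s} \<kappa> = integral {1..s} (\<lambda>_::real. 0::real)"
      by (rule Henstock_Kurzweil_Integration.integral_cong) (use assms(2) that in auto)
    then have "integral {1..s} \<kappa> = 0" by simp
    moreover have "integral {-1..1} \<kappa> + integral {1..s} \<kappa> = integral {-1..s} \<kappa>"
      by (rule Henstock_Kurzweil_Integration.integral_combine) (use that int in auto)
    ultimately show ?thesis by (simp add: Xint_def)
  qed
  show "(Xint \<kappa> has_real_derivative \<kappa> s) (at s)" for s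
  proof (cases "s < 0")
    case True
    have "eventually (\<lambda>y. y \<in> {..<0}) (nhds s)"
      using True by (intro eventually_nhds_in_open) auto
    then have ev: "eventually (\<lambda>y. Xint \<kappa> y = 0) (nhds s)"
      by eventually_elim (auto intro: z)
    show ?thesis
      using True assms(1) by (subst DERIV_cong_ev[OF refl ev refl]) auto
  next
    case False
    have "((\<lambda>x. integral {-1..x} \<kappa>) has_real_derivative \<kappa> s) (at s within {-1..s+1})"
      by (rule integral_has_real_derivative) (use c continuous_on_subset False in auto)
    moreover have "at s within {-1..s+1} = at s"
      by (rule at_within_interior) (use False in auto)
    ultimately show ?thesis by (simp add: Xint_def[abs_def])
  qed
  show "Xint \<kappa> 1 = integral {0..1} \<kappa>"
  proof -
    have "integral {-1..0} \<kappa> = integral {-1..0} (\<lambda>_::real. 0::real)"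
      by (rule Henstock_Kurzweil_Integration.integral_cong) (use assms(1) in auto)
    then have "integral {-1..0} \<kappa> = 0" by simp
    moreover have "integral {-1..0} \<kappa> + integral {0..1} \<kappa> = integral {-1..1} \<kappa>"
      by (rule Henstock_Kurzweil_Integration.integral_combine) (use int in auto)
    ultimately show ?thesis by (simp add: Xint_def)
  qed
qed

lemma Xint_bounds:
  fixes \<kappa> :: "real \<Rightarrow> real"
  assumes "\<And>s. s \<le> 0 \<Longrightarrow> \<kappa> s = 0" "\<And>s. s \<ge> 1 \<Longrightarrow> \<kappa> s = 0"
    and c: "continuous_on UNIV \<kappa>" and nn: "\<And>s. \<kappa> s \<ge> 0"
  shows "0 \<le> Xint \<kappa> s" "Xint \<kappa> s \<le> Xint \<kappa> 1"
proof -
  have int: "\<kappa> integrable_on {a..b}" for a b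
    by (rule integrable_continuous_real) (use c continuous_on_subset in blast)
  have pos: "0 \<le> integral {a..b} \<kappa>" for a b
    by (rule Henstock_Kurzweil_Integration.integral_nonneg[OF int nn])
  show "0 \<le> Xint \<kappa> s" unfolding Xint_def by (rule pos)
  show "Xint \<kappa> s \<le> Xint \<kappa> 1"
  proof (cases "s \<le> 1")
    case True
    show ?thesis
    proof (cases "s \<le> 0")
      case True
      then have "Xint \<kappa> s = 0" using Xint_props(1)[OF assms(1-3)] by blast
      moreover have "0 \<le> Xint \<kappa> 1" unfolding Xint_def by (rule pos)
      ultimately show ?thesis by simp
    next
      case False
      have "integral {-1..s} \<kappa> + integral {s..1} \<kappa> = integral {-1..1} \<kappa>"
        by (rule Henstock_Kurzweil_Integration.integral_combine[OF _ True int]) (use False in simp)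
      moreover have "0 \<le> integral {s..1} \<kappa>" by (rule pos)
      ultimately show ?thesis by (simp add: Xint_def)
    qed
  next
    case False
    then show ?thesis using Xint_props(2)[OF assms(1-3), of s] by simp
  qed
qed

definition Yper :: "(real \<Rightarrow> real) \<Rightarrow> real \<Rightarrow> real \<Rightarrow> real \<Rightarrow> real" where
  "Yper \<kappa> N \<delta> t = Xint \<kappa> 1 * of_int \<lfloor>N*t\<rfloor> + Xint \<kappa> (frac (N*t) / \<delta>)"

lemma per_integral:
  fixes \<kappa> :: "real \<Rightarrow> real" and N \<delta> a b :: real
  assumes "\<And>s. s \<le> 0 \<Longrightarrow> \<kappa> s = 0" "\<And>s. s \<ge> 1 \<Longrightarrow> \<kappa> s = 0"
    and c: "continuous_on UNIV \<kappa>" and d: "0 < \<delta>" "\<delta> < 1" and N: "0 < N" and ab: "a \<le> b"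
  shows "((\<lambda>t. \<kappa> (frac (N*t) / \<delta>)) has_integral (\<delta>/N) * (Yper \<kappa> N \<delta> b - Yper \<kappa> N \<delta> a)) {a..b}"
proof -
  note X = Xint_props[OF assms(1-3)]
  have D: "((\<lambda>t. Yper \<kappa> N \<delta> t) has_real_derivative (N/\<delta>) * \<kappa> (frac (N*t)/\<delta>)) (at t)" for t
    unfolding Yper_def
    by (rule per_deriv[OF d N]) (use X in auto)
  have D2: "((\<lambda>t. (\<delta>/N) * Yper \<kappa> N \<delta> t) has_real_derivative \<kappa> (frac (N*t)/\<delta>)) (at t)" for t
  proof -
    have "((\<lambda>t. (\<delta>/N) * Yper \<kappa> N \<delta> t) has_real_derivative (\<delta>/N) * ((N/\<delta>) * \<kappa> (frac (N*t)/\<delta>))) (at t)"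
      by (rule DERIV_cmult[OF D])
    moreover have "(\<delta>/N) * ((N/\<delta>) * \<kappa> (frac (N*t)/\<delta>)) = \<kappa> (frac (N*t)/\<delta>)"
      using d N by (simp add: field_simps)
    ultimately show ?thesis by simp
  qed
  show ?thesis
    using ftc_real[OF ab D2] by (simp add: right_diff_distrib)
qed

lemma Yper_0: "Yper \<kappa> N \<delta> 0 = Xint \<kappa> 0"
  by (simp add: Yper_def)

lemma Yper_1: "Yper \<kappa> (real m) \<delta> 1 = Xint \<kappa> 1 * real m + Xint \<kappa> 0"
  by (simp add: Yper_def frac_def)

lemma per_integral01:
  fixes \<kappa> :: "real \<Rightarrow> real" and \<delta> :: real and m :: nat
  assumes "\<And>s. s \<le> 0 \<Longrightarrow> \<kappa> s = 0" "\<And>s. s \<ge> 1 \<Longrightarrow> \<kappa> s = 0"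
    and c: "continuous_on UNIV \<kappa>" and d: "0 < \<delta>" "\<delta> < 1" and m: "m \<ge> 1"
  shows "((\<lambda>t. \<kappa> (frac (real m*t) / \<delta>)) has_integral \<delta> * integral {0..1} \<kappa>) {0..1}"
proof -
  have "((\<lambda>t. \<kappa> (frac (real m*t) / \<delta>)) has_integral (\<delta>/real m) * (Yper \<kappa> (real m) \<delta> 1 - Yper \<kappa> (real m) \<delta> 0)) {0..1}"
    by (rule per_integral[OF assms(1-5)]) (use m in auto)
  moreover have "(\<delta>/real m) * (Yper \<kappa> (real m) \<delta> 1 - Yper \<kappa> (real m) \<delta> 0) = \<delta> * integral {0..1} \<kappa>"
    unfolding Yper_0 Yper_1 using m Xint_props(4)[OF assms(1-3)] by (simp add: field_simps)
  ultimately show ?thesis by simp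
qed

lemma bq_zero: "s \<le> 0 \<or> s \<ge> 1 \<Longrightarrow> bq s = 0"
proof -
  assume "s \<le> 0 \<or> s \<ge> 1"
  then have "s - s^2 \<le> 0"
  proof
    assume "s \<le> 0" then show ?thesis by (simp add: power2_eq_square mult_nonpos_nonpos) (smt (verit) zero_le_square)
  next
    assume "s \<ge> 1" then have "s * s \<ge> s * 1" by (intro mult_left_mono) auto
    then show ?thesis by (simp add: power2_eq_square)
  qed
  then show ?thesis by (simp add: bq_def)
qed

lemma bq_nonneg: "0 \<le> bq s" by (simp add: bq_def)

lemma bq_le: "bq s \<le> 1/4"
proof -
  have "s - s^2 \<le> 1/4" using zero_le_square[of "s - 1/2"] by (simp add: power2_eq_square algebra_simps)
  then show ?thesis unfolding bq_def by (intro max.boundedI) auto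
qed

lemma bq_pos_range: "bq s > 0 \<Longrightarrow> 0 < s \<and> s < 1"
proof (rule ccontr)
  assume a: "bq s > 0" "\<not> (0 < s \<and> s < 1)"
  then have "s \<le> 0 \<or> s \<ge> 1" by auto
  then have "bq s = 0" by (rule bq_zero)
  with a show False by simp
qed

lemma bpsi_zero: "s \<le> 0 \<Longrightarrow> bpsi s = 0" "s \<ge> 1 \<Longrightarrow> bpsi s = 0"
  by (simp_all add: bpsi_def bq_zero)

lemma bdpsi_zero: "s \<le> 0 \<Longrightarrow> bdpsi s = 0" "s \<ge> 1 \<Longrightarrow> bdpsi s = 0"
  by (simp_all add: bdpsi_def bq_zero)

lemma bPhi_zero: "s \<le> 0 \<Longrightarrow> bPhi s = 0" "s \<ge> 1 \<Longrightarrow> bPhi s = 0"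
  by (simp_all add: bPhi_def bq_zero)

lemma bpsi_deriv: "(bpsi has_real_derivative bdpsi s) (at s)"
proof -
  have h: "((\<lambda>s. s - s^2) has_real_derivative (1 - 2 * s)) (at s)"
    by (auto intro!: derivative_eq_intros)
  have d1: "((\<lambda>s. (max 0 (s - s^2))^(Suc 1)) has_real_derivative (Suc 1) * (max 0 (s - s^2))^1 * (1 - 2 * s)) (at s)"
    using DERIV_chain2[OF maxpow_deriv h, of 1] by simp
  have d2: "((\<lambda>s. 1 - 2 * s) has_real_derivative (-2)) (at s)"
    by (auto intro!: derivative_eq_intros)
  have e: "bpsi = (\<lambda>s. 3 * (max 0 (s - s^2))^(Suc 1) * (1 - 2 * s))"
    by (rule ext) (simp add: bpsi_def bq_def power2_eq_square)
  from DERIV_mult[OF DERIV_cmult[OF d1, of 3] d2]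
  have "((\<lambda>s. 3 * (max 0 (s - s^2))^(Suc 1) * (1 - 2 * s)) has_real_derivative
      3 * ((Suc 1) * (max 0 (s - s^2))^1 * (1 - 2 * s)) * (1 - 2 * s) + (-2) * (3 * (max 0 (s - s^2))^(Suc 1))) (at s)"
    by (simp add: mult.assoc)
  then show ?thesis unfolding e
    by (rule DERIV_cong) (simp add: bdpsi_def bq_def algebra_simps power2_eq_square)
qed

lemma bpsi_cont: "continuous_on UNIV bpsi"
  unfolding bpsi_def bq_def by (intro continuous_intros)

lemma bdpsi_cont: "continuous_on UNIV bdpsi"
  unfolding bdpsi_def bq_def by (intro continuous_intros)

lemma bpsi_bound: "\<bar>bpsi s\<bar> \<le> 1/2"
proof (cases "bq s > 0")
  case True
  then have r: "\<bar>1 - 2 * s\<bar> \<le> 1" using bq_pos_range[OF True] by auto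
  have q2: "(bq s)^2 \<le> (1/4)^2" by (rule power_mono[OF bq_le bq_nonneg])
  have "\<bar>bpsi s\<bar> = 3 * (bq s)^2 * \<bar>1 - 2 * s\<bar>" by (simp add: bpsi_def abs_mult)
  also have "\<dots> \<le> 3 * (1/4)^2 * 1"
    by (intro mult_mono r q2) auto
  finally show ?thesis by (simp add: power2_eq_square)
next
  case False
  then have "bq s = 0" using bq_nonneg[of s] by linarith
  then show ?thesis by (simp add: bpsi_def)
qed

lemma bpsi_int0: "integral {0..1} bpsi = 0"
proof -
  have "(bpsi has_integral (bPhi 1 - bPhi 0)) {0..1}"
    by (rule ftc_real) (auto intro: bPhi_deriv)
  then show ?thesis by (simp add: bPhi_zero integral_unique)
qed

lemma int_pos_aux:
  fixes g :: "real \<Rightarrow> real"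
  assumes "continuous_on UNIV g" "\<And>s. g s \<ge> 0" "0 \<le> a" "a < b" "b \<le> 1" "c > 0"
    and "\<And>s. a \<le> s \<Longrightarrow> s \<le> b \<Longrightarrow> g s \<ge> c"
  shows "integral {0..1} g > 0"
proof -
  have int: "g integrable_on {u..v}" for u v
    by (rule integrable_continuous_real) (use assms(1) continuous_on_subset in blast)
  have "integral {a..b} (\<lambda>_. c) \<le> integral {a..b} g"
    by (rule Henstock_Kurzweil_Integration.integral_le[OF _ int]) (use assms(7) in auto)
  moreover have "integral {a..b} g \<le> integral {0..1} g"
    by (rule integral_subset_le[OF _ int int]) (use assms in auto)
  moreover have "integral {a..b} (\<lambda>_. c) > 0" using assms by simp
  ultimately show ?thesis by linarith
qed

lemma A2_pos: "integral {0..1} (\<lambda>s. (bpsi s)^2) > 0"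
proof (rule int_pos_aux[where a="1/8" and b="3/8" and c="(3 * (7/64)^2 * (1/4))^2"])
  show "continuous_on UNIV (\<lambda>s. (bpsi s)^2)" using bpsi_cont by (intro continuous_intros)
  fix s :: real assume s: "1/8 \<le> s" "s \<le> 3/8"
  have q: "s - s^2 \<ge> 7/64"
  proof -
    have "0 \<le> (s - 1/8) * (7/8 - s)" using s by (intro mult_nonneg_nonneg) auto
    moreover have "(s - 1/8) * (7/8 - s) = s - s^2 - 7/64" by (simp add: power2_eq_square field_simps)
    ultimately show ?thesis by linarith
  qed
  then have bqs: "bq s = s - s^2" by (simp add: bq_def)
  have l: "1 - 2 * s \<ge> 1/4" using s by simp
  have "3 * (7/64)^2 * (1/4) \<le> 3 * (s - s^2)^2 * (1 - 2 * s)"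
    by (intro mult_mono power_mono q l mult_left_mono) auto
  then have "3 * (7/64)^2 * (1/4) \<le> bpsi s" by (simp add: bpsi_def bqs)
  then show "(3 * (7/64)^2 * (1/4))^2 \<le> (bpsi s)^2" by (intro power_mono) auto
qed auto

lemma B2_pos: "integral {0..1} (\<lambda>s. (bdpsi s)^2) > 0"
proof (rule int_pos_aux[where a="1/16" and b="1/8" and c="(6 * (15/256) * (7/16))^2"])
  show "continuous_on UNIV (\<lambda>s. (bdpsi s)^2)" using bdpsi_cont by (intro continuous_intros)
  fix s :: real assume s: "1/16 \<le> s" "s \<le> 1/8"
  have q: "s - s^2 \<ge> 15/256"
  proof -
    have "0 \<le> (s - 1/16) * (15/16 - s)" using s by (intro mult_nonneg_nonneg) auto
    moreover have "(s - 1/16) * (15/16 - s) = s - s^2 - 15/256" by (simp add: power2_eq_square field_simps)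
    ultimately show ?thesis by linarith
  qed
  have "0 \<le> s^2" by simp
  then have q2: "s - s^2 \<le> 1/8" using s by linarith
  then have bqs: "bq s = s - s^2" using q by (simp add: bq_def)
  have l0: "(1 - 2 * s)^2 \<ge> (3/4)^2" using s by (intro power_mono) auto
  have "(3/4::real)^2 = 9/16" by (simp add: power_divide)
  then have l: "(1 - 2 * s)^2 \<ge> 9/16" using l0 by simp
  have "6 * (15/256) * (7/16) \<le> 6 * (s - s^2) * ((1 - 2 * s)^2 - (s - s^2))"
    using q q2 l by (intro mult_mono mult_left_mono) auto
  then have "6 * (15/256) * (7/16) \<le> bdpsi s" by (simp add: bdpsi_def bqs algebra_simps power2_eq_square)
  then show "(6 * (15/256) * (7/16))^2 \<le> (bdpsi s)^2" by (intro power_mono) auto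
qed auto

definition vv :: "real \<Rightarrow> real \<Rightarrow> real \<Rightarrow> real" where
  "vv N \<delta> t = (1/\<delta>) * bpsi (frac (N*t) / \<delta>)"
definition dv :: "real \<Rightarrow> real \<Rightarrow> real \<Rightarrow> real" where
  "dv N \<delta> t = (N/\<delta>^2) * bdpsi (frac (N*t) / \<delta>)"

locale seqpar =
  fixes m :: nat and \<delta> :: real
  assumes m: "m \<ge> 1" and d0: "0 < \<delta>" and d1: "\<delta> < 1"
begin

abbreviation "N \<equiv> real m"

lemma N_pos: "0 < N" using m by simp

lemma vv_deriv: "(vv N \<delta> has_real_derivative dv N \<delta> t) (at t)"
proof -
  have "((\<lambda>t. 0 * of_int \<lfloor>N*t\<rfloor> + bpsi (frac (N*t) / \<delta>)) has_real_derivative (N/\<delta>) * bdpsi (frac (N*t)/\<delta>)) (at t)"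
    by (rule per_deriv[OF d0 d1 N_pos]) (auto simp: bpsi_zero bpsi_deriv)
  then have "((\<lambda>t. bpsi (frac (N*t) / \<delta>)) has_real_derivative (N/\<delta>) * bdpsi (frac (N*t)/\<delta>)) (at t)"
    by simp
  from DERIV_cmult[OF this, of "1/\<delta>"] show ?thesis
    unfolding vv_def[abs_def] dv_def by (simp add: power2_eq_square)
qed

lemma vv_cont: "continuous_on UNIV (vv N \<delta>)"
  using vv_deriv by (meson DERIV_continuous continuous_at_imp_continuous_on)

lemma dv_cont: "continuous_on UNIV (dv N \<delta>)"
proof -
  have "isCont (\<lambda>t. bdpsi (frac (N*t) / \<delta>)) t" for t
    by (rule per_cont[OF d0 d1 N_pos]) (auto simp: bdpsi_zero bdpsi_cont)
  then show ?thesis unfolding dv_def[abs_def]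
    by (intro continuous_at_imp_continuous_on ballI continuous_intros) auto
qed

lemma vv_per: "vv N \<delta> (t + 1) = vv N \<delta> t"
proof -
  have "frac (N*(t+1)) = frac (N*t)"
    using frac_add_of_int_right[of "N*t" "int m"] by (simp add: algebra_simps)
  then show ?thesis by (simp add: vv_def)
qed

lemma dv_per: "dv N \<delta> (t + 1) = dv N \<delta> t"
proof -
  have "frac (N*(t+1)) = frac (N*t)"
    using frac_add_of_int_right[of "N*t" "int m"] by (simp add: algebra_simps)
  then show ?thesis by (simp add: dv_def)
qed

lemma vv_int0: "integral {0..1} (vv N \<delta>) = 0"
proof -
  have "((\<lambda>t. bpsi (frac (N*t) / \<delta>)) has_integral \<delta> * integral {0..1} bpsi) {0..1}"
    by (rule per_integral01[OF _ _ bpsi_cont d0 d1 m]) (auto simp: bpsi_zero)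
  then show ?thesis unfolding vv_def[abs_def] bpsi_int0 by (simp add: integral_unique)
qed

definition "A2 = integral {0..1} (\<lambda>s. (bpsi s)^2)"
definition "B2 = integral {0..1} (\<lambda>s. (bdpsi s)^2)"

lemma vv_int2: "integral {0..1} (\<lambda>t. (vv N \<delta> t)^2) = A2 / \<delta>"
proof -
  have "((\<lambda>t. (\<lambda>s. (bpsi s)^2) (frac (N*t) / \<delta>)) has_integral \<delta> * A2) {0..1}"
    unfolding A2_def
    by (rule per_integral01[OF _ _ _ d0 d1 m]) (auto simp: bpsi_zero intro!: continuous_intros bpsi_cont)
  then have "((\<lambda>t. (1/\<delta>^2) * (bpsi (frac (N*t) / \<delta>))^2) has_integral (1/\<delta>^2) * (\<delta> * A2)) {0..1}"
    by (intro has_integral_mult_right) simp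
  moreover have "(1/\<delta>^2) * (\<delta> * A2) = A2 / \<delta>" using d0 by (simp add: power2_eq_square field_simps)
  moreover have "(\<lambda>t. (vv N \<delta> t)^2) = (\<lambda>t. (1/\<delta>^2) * (bpsi (frac (N*t) / \<delta>))^2)"
    by (rule ext) (simp add: vv_def power_mult_distrib power_divide)
  ultimately show ?thesis by (metis integral_unique)
qed

lemma dv_int2: "integral {0..1} (\<lambda>t. (dv N \<delta> t)^2) = N^2 * B2 / \<delta>^3"
proof -
  have "((\<lambda>t. (\<lambda>s. (bdpsi s)^2) (frac (N*t) / \<delta>)) has_integral \<delta> * B2) {0..1}"
    unfolding B2_def
    by (rule per_integral01[OF _ _ _ d0 d1 m]) (auto simp: bdpsi_zero intro!: continuous_intros bdpsi_cont)
  then have "((\<lambda>t. (N/\<delta>^2)^2 * (bdpsi (frac (N*t) / \<delta>))^2) has_integral (N/\<delta>^2)^2 * (\<delta> * B2)) {0..1}"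
    by (intro has_integral_mult_right) simp
  moreover have "(N/\<delta>^2)^2 * (\<delta> * B2) = N^2 * B2 / \<delta>^3" using d0 by (simp add: power2_eq_square power3_eq_cube field_simps)
  moreover have "(\<lambda>t. (dv N \<delta> t)^2) = (\<lambda>t. (N/\<delta>^2)^2 * (bdpsi (frac (N*t) / \<delta>))^2)"
    by (rule ext) (simp add: dv_def power_mult_distrib power_divide)
  ultimately show ?thesis by (metis integral_unique)
qed

end

lemma holder_aux:
  fixes \<beta> N \<delta> L I :: real
  assumes b: "0 < \<beta>" "\<beta> < 1" and N: "0 < N" and d: "0 < \<delta>"
    and p: "(\<delta>/N) powr \<beta> = 1/N" and L: "0 \<le> L" "L \<le> 2"
    and I1: "I \<le> L/\<delta>" and I2: "I \<le> L + 2/N"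
  shows "I \<le> 6 * L powr \<beta>"
proof -
  define p where "p = \<delta>/N"
  have pp: "p > 0" using N d by (simp add: p_def)
  have p1: "p powr (1 - \<beta>) = \<delta>"
  proof -
    have "p powr (1 - \<beta>) = p powr 1 / p powr \<beta>" by (rule powr_diff)
    also have "\<dots> = p * N" using pp p N d by (simp add: p_def)
    also have "\<dots> = \<delta>" using N by (simp add: p_def)
    finally show ?thesis .
  qed
  show ?thesis
  proof (cases "L = 0")
    case True
    then show ?thesis using I1 by simp
  next
    case False
    then have Lp: "L > 0" using L by simp
    have split: "L = L powr \<beta> * L powr (1 - \<beta>)"
      using Lp by (simp add: powr_add[symmetric])
    have Lb: "L powr \<beta> \<ge> 0" by simp
    show ?thesis
    proof (cases "L \<ge> 1/N")
      case True
      have "L powr (1 - \<beta>) \<le> 2 powr (1 - \<beta>)"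
        by (rule powr_mono2) (use b L in auto)
      also have "\<dots> \<le> 2 powr 1"
        by (rule powr_mono) (use b in auto)
      finally have l2: "L powr (1 - \<beta>) \<le> 2" by simp
      have "I \<le> 3 * L" using I2 True by simp
      also have "\<dots> = 3 * (L powr \<beta> * L powr (1 - \<beta>))" using split by simp
      also have "\<dots> \<le> 3 * (L powr \<beta> * 2)"
        using l2 Lb by (intro mult_left_mono) auto
      finally show ?thesis by simp
    next
      case False
      then have LN: "L < 1/N" by simp
      show ?thesis
      proof (cases "L \<ge> p")
        case True
        have "I \<le> 3 / N" using I2 LN by simp
        also have "\<dots> = 3 * p powr \<beta>" using p by (simp add: p_def)
        also have "\<dots> \<le> 3 * L powr \<beta>"
          using True pp b by (intro mult_left_mono powr_mono2) auto
        finally have "I \<le> 3 * L powr \<beta>" .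
        then show ?thesis using Lb by linarith
      next
        case False
        have "L powr (1 - \<beta>) \<le> p powr (1 - \<beta>)"
          using False Lp b by (intro powr_mono2) auto
        then have "L powr (1 - \<beta>) \<le> \<delta>" using p1 by simp
        have "I \<le> L / \<delta>" by (rule I1)
        also have "\<dots> = L powr \<beta> * (L powr (1 - \<beta>) / \<delta>)" using split by simp
        also have "\<dots> \<le> L powr \<beta> * 1"
          using \<open>L powr (1 - \<beta>) \<le> \<delta>\<close> d Lb by (intro mult_left_mono) auto
        finally have "I \<le> L powr \<beta>" by simp
        then show ?thesis using Lb by linarith
      qed
    qed
  qed
qed

lemma bpsi_bound2: "\<bar>bpsi s\<bar> * 2 \<le> 1" using bpsi_bound[of s] by linarith

context seqpar begin

lemma absbpsi_props:
  "\<And>s. s \<le> 0 \<Longrightarrow> \<bar>bpsi s\<bar> = 0" "\<And>s. s \<ge> 1 \<Longrightarrow> \<bar>bpsi s\<bar> = 0"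
  "continuous_on UNIV (\<lambda>s. \<bar>bpsi s\<bar>)" "\<And>s. \<bar>bpsi s\<bar> \<ge> 0"
  by (auto simp: bpsi_zero intro!: continuous_intros bpsi_cont)

lemma vv_abs_int1:
  assumes ab: "a \<le> b"
  shows "integral {a..b} (\<lambda>t. \<bar>vv N \<delta> t\<bar>) \<le> (b - a) + 2/N"
proof -
  let ?k = "\<lambda>s. \<bar>bpsi s\<bar>"
  note X = Xint_props[OF absbpsi_props(1-3)]
  note XB = Xint_bounds[OF absbpsi_props]
  have hi: "((\<lambda>t. ?k (frac (N*t) / \<delta>)) has_integral (\<delta>/N) * (Yper ?k N \<delta> b - Yper ?k N \<delta> a)) {a..b}"
    by (rule per_integral[OF absbpsi_props(1-3) d0 d1 N_pos ab])
  have eq: "(\<lambda>t. \<bar>vv N \<delta> t\<bar>) = (\<lambda>t. (1/\<delta>) * ?k (frac (N*t) / \<delta>))"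
    using d0 by (simp add: vv_def abs_mult fun_eq_iff)
  have int: "integral {a..b} (\<lambda>t. \<bar>vv N \<delta> t\<bar>) = (Yper ?k N \<delta> b - Yper ?k N \<delta> a) / N"
  proof -
    have "((\<lambda>t. (1/\<delta>) * ?k (frac (N*t) / \<delta>)) has_integral (1/\<delta>) * ((\<delta>/N) * (Yper ?k N \<delta> b - Yper ?k N \<delta> a))) {a..b}"
      by (rule has_integral_mult_right[OF hi])
    moreover have "(1/\<delta>) * ((\<delta>/N) * (Yper ?k N \<delta> b - Yper ?k N \<delta> a)) = (Yper ?k N \<delta> b - Yper ?k N \<delta> a) / N"
      using d0 by simp
    ultimately show ?thesis unfolding eq by (metis integral_unique)
  qed
  define c where "c = Xint ?k 1"
  have c0: "0 \<le> c" using XB(1) by (simp add: c_def)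
  have c1: "c \<le> 1/2"
  proof -
    have "c = integral {0..1} ?k" using X(4) by (simp add: c_def)
    also have "\<dots> \<le> integral {0..1} (\<lambda>_::real. 1/2::real)"
      by (rule Henstock_Kurzweil_Integration.integral_le)
         (auto intro!: integrable_continuous_real continuous_intros bpsi_cont continuous_on_subset[OF bpsi_cont] simp: bpsi_bound2)
    finally show ?thesis by simp
  qed
  have fl: "of_int \<lfloor>N*b\<rfloor> - of_int \<lfloor>N*a\<rfloor> \<le> N*(b - a) + 1"
  proof -
    have "of_int \<lfloor>N*b\<rfloor> \<le> N*b" by (rule of_int_floor_le)
    moreover have "N*a - 1 < of_int \<lfloor>N*a\<rfloor>" by (rule real_of_int_floor_gt_diff_one)
    moreover have "N*(b - a) = N*b - N*a" by (simp add: algebra_simps)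
    ultimately show ?thesis by linarith
  qed
  have fl0: "0 \<le> N*(b - a) + 1" using ab N_pos by simp
  have "Yper ?k N \<delta> b - Yper ?k N \<delta> a = c * (of_int \<lfloor>N*b\<rfloor> - of_int \<lfloor>N*a\<rfloor>) + (Xint ?k (frac (N*b)/\<delta>) - Xint ?k (frac (N*a)/\<delta>))"
    by (simp add: Yper_def c_def algebra_simps)
  also have "\<dots> \<le> c * (N*(b - a) + 1) + c"
    using XB[of "frac (N*b)/\<delta>"] XB[of "frac (N*a)/\<delta>"] fl c0 unfolding c_def[symmetric]
    by (intro add_mono mult_left_mono) auto
  also have "\<dots> \<le> (1/2) * (N*(b - a) + 1) + 1/2"
    using c1 fl0 by (intro add_mono mult_right_mono) auto
  finally have "(Yper ?k N \<delta> b - Yper ?k N \<delta> a) / N \<le> ((1/2) * (N*(b - a) + 1) + 1/2) / N"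
    using N_pos by (simp add: divide_right_mono)
  also have "\<dots> = (b - a)/2 + 1/N" using N_pos by (simp add: field_simps)
  also have "\<dots> \<le> (b - a) + 2/N"
  proof -
    have h1: "1/N \<le> 2/N" using N_pos by (intro divide_right_mono) auto
    have h2: "(b - a)/2 \<le> b - a" using ab by simp
    show ?thesis using add_mono[OF h2 h1] by simp
  qed
  finally show ?thesis using int by simp
qed

lemma vv_abs_int2:
  assumes ab: "a \<le> b"
  shows "integral {a..b} (\<lambda>t. \<bar>vv N \<delta> t\<bar>) \<le> (b - a) / \<delta>"
proof -
  have "integral {a..b} (\<lambda>t. \<bar>vv N \<delta> t\<bar>) \<le> integral {a..b} (\<lambda>_::real. 1/\<delta>)"
  proof (rule Henstock_Kurzweil_Integration.integral_le)
    show "(\<lambda>t. \<bar>vv N \<delta> t\<bar>) integrable_on {a..b}"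
      by (intro integrable_continuous_real continuous_intros continuous_on_subset[OF vv_cont]) auto
    fix t :: real
    have "\<bar>vv N \<delta> t\<bar> = (1/\<delta>) * \<bar>bpsi (frac (N*t) / \<delta>)\<bar>" using d0 by (simp add: vv_def abs_mult)
    also have "\<dots> \<le> (1/\<delta>) * 1" using bpsi_bound[of "frac (N*t) / \<delta>"] d0
      by (intro mult_left_mono) auto
    finally show "\<bar>vv N \<delta> t\<bar> \<le> 1/\<delta>" by simp
  qed (intro integrable_continuous_real continuous_on_const)
  then show ?thesis using ab by simp
qed

lemma vv_holder:
  assumes b: "0 < \<beta>" "\<beta> < 1" and p: "(\<delta>/N) powr \<beta> = 1/N"
    and ab: "a \<le> b" "b - a \<le> 2"
  shows "integral {a..b} (\<lambda>t. \<bar>vv N \<delta> t\<bar>) \<le> 6 * (b - a) powr \<beta>"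
  by (rule holder_aux[OF b N_pos d0 p _ ab(2) vv_abs_int2[OF ab(1)] vv_abs_int1[OF ab(1)]]) (use ab in simp)

end

lemma norm_v2_sq: "(norm (v2 a b))^2 = a^2 + b^2"
  by (simp add: norm_vec_def L2_set_def UNIV_2)

lemma tint_add:
  assumes "continuous_on UNIV F" "continuous_on UNIV G"
  shows "tint (\<lambda>y. F y + G y) = tint F + tint G"
proof -
  have cF: "continuous_on cell F" and cG: "continuous_on cell G"
    using assms continuous_on_subset by blast+
  have c: "continuous_on cell (\<lambda>y. F y + G y)" using cF cG by (intro continuous_intros)
  show ?thesis
    unfolding tint_eq[OF c] tint_eq[OF cF] tint_eq[OF cG]
    by (rule integral_add) (auto simp: cell_def intro!: integrable_continuous cF[unfolded cell_def] cG[unfolded cell_def])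
qed

context seqpar begin

definition "ff y = vv N \<delta> (y$1) * vv N \<delta> (y$2)"
definition "GG y = v2 (dv N \<delta> (y$1) * vv N \<delta> (y$2)) (vv N \<delta> (y$1) * dv N \<delta> (y$2))"

lemma vv_cont': "continuous_on S (vv N \<delta>)" using vv_cont continuous_on_subset by blast
lemma dv_cont': "continuous_on S (dv N \<delta>)" using dv_cont continuous_on_subset by blast

lemma ff_cont: "continuous_on S ff"
  unfolding ff_def[abs_def]
  by (intro continuous_intros continuous_on_compose2[OF vv_cont]) auto

lemma GG_cont: "continuous_on S GG"
  unfolding GG_def[abs_def] v2_alt
  by (intro continuous_intros continuous_on_compose2[OF vv_cont] continuous_on_compose2[OF dv_cont]) auto

lemma tint_ff: "tint ff = 0"
  unfolding ff_def[abs_def] tint_prod[OF vv_cont vv_cont] vv_int0 by simp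

lemma L2norm_ff: "L2norm ff = A2 / \<delta>"
proof -
  have "tint (\<lambda>y. (ff y)^2) = tint (\<lambda>y. (vv N \<delta> (y$1))^2 * (vv N \<delta> (y$2))^2)"
    by (simp add: ff_def power_mult_distrib)
  also have "\<dots> = (A2/\<delta>) * (A2/\<delta>)"
    by (subst tint_prod) (auto intro!: continuous_intros vv_cont' simp: vv_int2)
  finally have "tint (\<lambda>y. (ff y)^2) = (A2/\<delta>)^2" by (simp add: power2_eq_square)
  moreover have "A2 > 0" using A2_pos by (simp add: A2_def)
  ultimately show ?thesis using d0 by (simp add: L2norm_def)
qed

lemma L2norm_GG: "L2norm_vec GG = sqrt (2 * (N^2 * B2 / \<delta>^3) * (A2/\<delta>))"
proof -
  have "tint (\<lambda>y. (norm (GG y))^2) = tint (\<lambda>y. (dv N \<delta> (y$1))^2 * (vv N \<delta> (y$2))^2 + (vv N \<delta> (y$1))^2 * (dv N \<delta> (y$2))^2)"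
    by (simp add: GG_def norm_v2_sq power_mult_distrib)
  also have "\<dots> = tint (\<lambda>y. (dv N \<delta> (y$1))^2 * (vv N \<delta> (y$2))^2) + tint (\<lambda>y. (vv N \<delta> (y$1))^2 * (dv N \<delta> (y$2))^2)"
    by (rule tint_add) (auto intro!: continuous_intros continuous_on_compose2[OF vv_cont] continuous_on_compose2[OF dv_cont])
  also have "\<dots> = (N^2 * B2 / \<delta>^3) * (A2/\<delta>) + (A2/\<delta>) * (N^2 * B2 / \<delta>^3)"
    by (subst tint_prod, (auto intro!: continuous_intros vv_cont' dv_cont')[2])+ (simp add: vv_int2 dv_int2)
  finally show ?thesis by (simp add: L2norm_vec_def mult_ac)
qed

end

lemma sum_UNIV_2: "(\<Sum>i\<in>(UNIV::2 set). g i) = g 1 + g 2"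
  by (simp add: UNIV_2)

lemma line_deriv1:
  assumes "\<And>x. (\<phi> has_derivative (\<lambda>h. \<Sum>i\<in>UNIV. P i x * h$i)) (at x)"
  shows "((\<lambda>s. \<phi> (v2 s t)) has_real_derivative P 1 (v2 s t)) (at s)"
proof -
  have d: "((\<lambda>s. v2 s t) has_derivative (\<lambda>h. h *\<^sub>R axis 1 1)) (at s)"
    unfolding v2_alt by (auto intro!: derivative_eq_intros)
  have "((\<lambda>s. \<phi> (v2 s t)) has_derivative (\<lambda>h. \<Sum>i\<in>UNIV. P i (v2 s t) * (h *\<^sub>R axis 1 (1::real))$i)) (at s)"
    using has_derivative_compose[OF d assms[of "v2 s t"]] by (simp add: o_def)
  moreover have "(\<lambda>h. \<Sum>i\<in>UNIV. P i (v2 s t) * (h *\<^sub>R axis 1 (1::real))$i) = (*) (P 1 (v2 s t))"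
    by (rule ext) (simp add: sum_UNIV_2 axis_def)
  ultimately show ?thesis unfolding has_field_derivative_def by metis
qed

lemma line_deriv2:
  assumes "\<And>x. (\<phi> has_derivative (\<lambda>h. \<Sum>i\<in>UNIV. P i x * h$i)) (at x)"
  shows "((\<lambda>t. \<phi> (v2 s t)) has_real_derivative P 2 (v2 s t)) (at t)"
proof -
  have d: "((\<lambda>t. v2 s t) has_derivative (\<lambda>h. h *\<^sub>R axis 2 1)) (at t)"
    unfolding v2_alt by (auto intro!: derivative_eq_intros)
  have "((\<lambda>t. \<phi> (v2 s t)) has_derivative (\<lambda>h. \<Sum>i\<in>UNIV. P i (v2 s t) * (h *\<^sub>R axis 2 (1::real))$i)) (at t)"
    using has_derivative_compose[OF d assms[of "v2 s t"]] by (simp add: o_def)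
  moreover have "(\<lambda>h. \<Sum>i\<in>UNIV. P i (v2 s t) * (h *\<^sub>R axis 2 (1::real))$i) = (*) (P 2 (v2 s t))"
    by (rule ext) (simp add: sum_UNIV_2 axis_def)
  ultimately show ?thesis unfolding has_field_derivative_def by metis
qed

lemma cont_v2_comp:
  assumes "continuous_on UNIV F"
  shows "continuous_on S (\<lambda>p. F (v2 (fst p) (snd p)))"
proof -
  have "continuous_on S (\<lambda>p. v2 (fst p) (snd p))"
    unfolding v2_alt by (intro continuous_intros)
  then show ?thesis by (rule continuous_on_compose2[OF assms]) auto
qed

lemma tint_lines1:
  fixes F :: "real^2 \<Rightarrow> real"
  assumes c: "continuous_on UNIV F" and z: "\<And>t. integral {0..1} (\<lambda>s. F (v2 s t)) = 0"
  shows "tint F = 0"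
proof -
  have cc: "continuous_on cell F" using c continuous_on_subset by blast
  have "tint F = integral {0..1} (\<lambda>s. integral {0..1} (\<lambda>t. F (v2 s t)))"
  proof -
    have "integral (cbox 0 One) F = integral {(0::real^2)$1..(One::real^2)$1} (\<lambda>s. integral {(0::real^2)$2..(One::real^2)$2} (\<lambda>t. F (v2 s t)))"
      by (rule integral_cart2) (use cc in \<open>simp add: cell_def\<close>)
    then show ?thesis unfolding tint_eq[OF cc] cell_def by (simp only: One2 zero_index)
  qed
  also have "\<dots> = integral (cbox 0 1) (\<lambda>s. integral (cbox 0 1) (\<lambda>t. F (v2 s t)))"
    by (simp add: cbox_interval)
  also have "\<dots> = integral (cbox 0 1) (\<lambda>t. integral (cbox 0 1) (\<lambda>s. F (v2 s t)))"
  proof (rule integral_swap_continuous)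
    show "continuous_on (cbox (0, 0) (1, 1)) (\<lambda>(x, y). F (v2 x y))"
      using cont_v2_comp[OF c] by (simp add: case_prod_beta')
  qed
  also have "\<dots> = 0" using z by (simp add: cbox_interval)
  finally show ?thesis .
qed

lemma tint_lines2:
  fixes F :: "real^2 \<Rightarrow> real"
  assumes c: "continuous_on UNIV F" and z: "\<And>s. integral {0..1} (\<lambda>t. F (v2 s t)) = 0"
  shows "tint F = 0"
proof -
  have cc: "continuous_on cell F" using c continuous_on_subset by blast
  have "tint F = integral {0..1} (\<lambda>s. integral {0..1} (\<lambda>t. F (v2 s t)))"
  proof -
    have "integral (cbox 0 One) F = integral {(0::real^2)$1..(One::real^2)$1} (\<lambda>s. integral {(0::real^2)$2..(One::real^2)$2} (\<lambda>t. F (v2 s t)))"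
      by (rule integral_cart2) (use cc in \<open>simp add: cell_def\<close>)
    then show ?thesis unfolding tint_eq[OF cc] cell_def by (simp only: One2 zero_index)
  qed
  also have "\<dots> = 0" using z by simp
  finally show ?thesis .
qed

lemma bdpsi_bound: "\<bar>bdpsi s\<bar> \<le> 2"
proof (cases "bq s > 0")
  case True
  then have r: "\<bar>1 - 2 * s\<bar> \<le> 1" using bq_pos_range[OF True] by auto
  have r2: "(1 - 2 * s)^2 \<le> 1"
  proof -
    have "\<bar>1 - 2 * s\<bar>^2 \<le> 1^2" by (rule power_mono[OF r]) simp
    then show ?thesis by simp
  qed
  have q: "0 \<le> bq s" "bq s \<le> 1/4" by (rule bq_nonneg, rule bq_le)
  have q2: "(bq s)^2 \<le> (1/4)^2" by (rule power_mono[OF q(2) q(1)])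
  have a0: "0 \<le> 6 * bq s * (1 - 2 * s)^2" using q by simp
  have b0: "0 \<le> 6 * (bq s)^2" by simp
  have "\<bar>bdpsi s\<bar> \<le> 6 * bq s * (1 - 2 * s)^2 + 6 * (bq s)^2"
    unfolding bdpsi_def by (rule abs_leI) (use a0 b0 in linarith)+
  also have "\<dots> \<le> 6 * (1/4) * 1 + 6 * (1/4)^2"
    using q q2 r2 by (intro add_mono mult_mono mult_left_mono) auto
  finally show ?thesis by (simp add: power2_eq_square)
next
  case False
  then have "bq s = 0" using bq_nonneg[of s] by linarith
  then show ?thesis by (simp add: bdpsi_def)
qed

lemma axis_comps [simp]: "axis 1 (1::real) $ (2::2) = 0" "axis 2 (1::real) $ (1::2) = 0"
  "axis 1 (1::real) $ (1::2) = 1" "axis 2 (1::real) $ (2::2) = 1"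
  by (simp_all add: axis_def)

lemma axis_add_1: "(x + axis 1 (1::real)) $ 1 = x$1 + 1" "(x + axis 1 (1::real)) $ 2 = (x::real^2)$2"
  by (simp_all add: axis_def)
lemma axis_add_2: "(x + axis 2 (1::real)) $ 1 = (x::real^2)$1" "(x + axis 2 (1::real)) $ 2 = x$2 + 1"
  by (simp_all add: axis_def)

context seqpar begin

lemma vv_bound: "\<bar>vv N \<delta> t\<bar> \<le> 1/\<delta>"
proof -
  have "\<bar>vv N \<delta> t\<bar> = (1/\<delta>) * \<bar>bpsi (frac (N*t) / \<delta>)\<bar>" using d0 by (simp add: vv_def abs_mult)
  also have "\<dots> \<le> (1/\<delta>) * 1" using bpsi_bound[of "frac (N*t) / \<delta>"] d0
    by (intro mult_left_mono) auto
  finally show ?thesis by simp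
qed

lemma dv_bound: "\<bar>dv N \<delta> t\<bar> \<le> (N/\<delta>^2) * 2"
proof -
  have "\<bar>dv N \<delta> t\<bar> = (N/\<delta>^2) * \<bar>bdpsi (frac (N*t) / \<delta>)\<bar>" using d0 by (simp add: dv_def abs_mult)
  also have "\<dots> \<le> (N/\<delta>^2) * 2" using bdpsi_bound[of "frac (N*t) / \<delta>"] d0
    by (intro mult_left_mono) auto
  finally show ?thesis .
qed

lemma ff_periodic: "periodic2 ff"
  unfolding periodic2_def
proof (intro allI)
  fix x :: "real^2" and i :: 2
  show "ff (x + axis i 1) = ff x"
    using exhaust_2[of i] by (auto simp: ff_def axis_add_1 axis_add_2 vv_per)
qed

lemma GG_periodic: "periodic2 GG"
  unfolding periodic2_def
proof (intro allI)
  fix x :: "real^2" and i :: 2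
  show "GG (x + axis i 1) = GG x"
    using exhaust_2[of i] by (auto simp: GG_def axis_add_1 axis_add_2 vv_per dv_per)
qed

lemma GG_comp: "GG y $ 1 = dv N \<delta> (y$1) * vv N \<delta> (y$2)" "GG y $ 2 = vv N \<delta> (y$1) * dv N \<delta> (y$2)"
  by (simp_all add: GG_def)

lemma GG_comp_cont: "continuous_on (S::(real^2) set) (\<lambda>y. GG y $ i)"
proof -
  have "i = 1 \<or> i = 2" by (rule exhaust_2)
  moreover have "continuous_on S (\<lambda>y::real^2. dv N \<delta> (y$1) * vv N \<delta> (y$2))"
    by (intro continuous_intros continuous_on_compose2[OF vv_cont] continuous_on_compose2[OF dv_cont]) auto
  moreover have "continuous_on S (\<lambda>y::real^2. vv N \<delta> (y$1) * dv N \<delta> (y$2))"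
    by (intro continuous_intros continuous_on_compose2[OF vv_cont] continuous_on_compose2[OF dv_cont]) auto
  ultimately show ?thesis by (auto simp: GG_comp)
qed

lemma meas_cont: "continuous_on UNIV F \<Longrightarrow> F \<in> borel_measurable lebesgue"
  using continuous_imp_measurable_on_sets_lebesgue[of UNIV F] by (simp add: lebesgue_on_UNIV_eq)

lemma ff_ess: "ess_bounded ff"
  unfolding ess_bounded_def
proof (intro exI AE_I2)
  fix y :: "real^2"
  have "\<bar>ff y\<bar> = \<bar>vv N \<delta> (y$1)\<bar> * \<bar>vv N \<delta> (y$2)\<bar>" by (simp add: ff_def abs_mult)
  also have "\<dots> \<le> (1/\<delta>) * (1/\<delta>)" using d0 by (intro mult_mono vv_bound) auto
  finally show "\<bar>ff y\<bar> \<le> (1/\<delta>) * (1/\<delta>)" .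
qed

lemma GG_ess: "ess_bounded (\<lambda>y. GG y $ i)"
  unfolding ess_bounded_def
proof (intro exI AE_I2)
  fix y :: "real^2"
  have "i = 1 \<or> i = 2" by (rule exhaust_2)
  then show "\<bar>GG y $ i\<bar> \<le> ((N/\<delta>^2) * 2) * (1/\<delta>)"
  proof
    assume "i = 1"
    then have "\<bar>GG y $ i\<bar> = \<bar>dv N \<delta> (y$1)\<bar> * \<bar>vv N \<delta> (y$2)\<bar>" by (simp add: GG_comp abs_mult)
    also have "\<dots> \<le> ((N/\<delta>^2) * 2) * (1/\<delta>)" using d0 by (intro mult_mono vv_bound dv_bound) auto
    finally show ?thesis .
  next
    assume "i = 2"
    then have "\<bar>GG y $ i\<bar> = \<bar>dv N \<delta> (y$2)\<bar> * \<bar>vv N \<delta> (y$1)\<bar>" by (simp add: GG_comp abs_mult)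
    also have "\<dots> \<le> ((N/\<delta>^2) * 2) * (1/\<delta>)" using d0 by (intro mult_mono vv_bound dv_bound) auto
    finally show ?thesis .
  qed
qed

lemma weak_grad: "weak_gradient ff GG"
  unfolding weak_gradient_def
proof (intro conjI allI impI)
  fix i :: 2
  show "integrable (lebesgue_on cell) (\<lambda>y. GG y $ i)"
    unfolding cell_def by (rule continuous_imp_integrable[OF GG_comp_cont])
next
  fix \<phi> P and i :: 2
  assume C1: "C1_periodic \<phi> P"
  have dphi: "\<And>x. (\<phi> has_derivative (\<lambda>h. \<Sum>i\<in>UNIV. P i x * h $ i)) (at x)"
    and Pc: "\<And>i. continuous_on UNIV (P i)" and per: "periodic2 \<phi>"
    using C1 by (auto simp: C1_periodic_def)
  have phic: "continuous_on UNIV \<phi>"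
    using dphi by (meson has_derivative_continuous continuous_at_imp_continuous_on)
  have i12: "i = 1 \<or> i = 2" by (rule exhaust_2)
  define F where "F y = ff y * P i y + GG y $ i * \<phi> y" for y
  have Fc: "continuous_on UNIV F"
    unfolding F_def using Pc phic GG_comp_cont ff_cont GG_cont by (intro continuous_intros) auto
  have phi1: "\<phi> (v2 1 t) = \<phi> (v2 0 t)" for t
  proof -
    have "v2 1 t = v2 0 t + axis 1 1" by (simp add: vec_eq_iff forall_2 axis_def)
    then show ?thesis using per by (simp add: periodic2_def)
  qed
  have phi2: "\<phi> (v2 s 1) = \<phi> (v2 s 0)" for s
  proof -
    have "v2 s 1 = v2 s 0 + axis 2 1" by (simp add: vec_eq_iff forall_2 axis_def)
    then show ?thesis using per by (simp add: periodic2_def)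
  qed
  have vv10: "vv N \<delta> 1 = vv N \<delta> 0" using vv_per[of 0] by simp
  have "tint F = 0"
    using i12
  proof
    assume i1: "i = 1"
    show "tint F = 0"
    proof (rule tint_lines1[OF Fc])
      fix t
      define H where "H s = vv N \<delta> s * vv N \<delta> t * \<phi> (v2 s t)" for s
      have "(H has_real_derivative F (v2 s t)) (at s)" for s
      proof -
        have "((\<lambda>s. vv N \<delta> s * vv N \<delta> t * \<phi> (v2 s t)) has_real_derivative
              (dv N \<delta> s * vv N \<delta> t) * \<phi> (v2 s t) + P 1 (v2 s t) * (vv N \<delta> s * vv N \<delta> t)) (at s)"
          by (rule DERIV_mult[OF DERIV_cmult_right[OF vv_deriv] line_deriv1[OF dphi]])
        then show ?thesis unfolding H_def F_def i1 by (simp add: ff_def GG_comp algebra_simps)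
      qed
      then have "((\<lambda>s. F (v2 s t)) has_integral H 1 - H 0) {0..1}"
        by (intro ftc_real) auto
      moreover have "H 1 - H 0 = 0" by (simp add: H_def vv10 phi1)
      ultimately show "integral {0..1} (\<lambda>s. F (v2 s t)) = 0" by (simp add: integral_unique)
    qed
  next
    assume i2: "i = 2"
    show "tint F = 0"
    proof (rule tint_lines2[OF Fc])
      fix s
      define H where "H t = vv N \<delta> s * vv N \<delta> t * \<phi> (v2 s t)" for t
      have "(H has_real_derivative F (v2 s t)) (at t)" for t
      proof -
        have "((\<lambda>t. vv N \<delta> s * vv N \<delta> t * \<phi> (v2 s t)) has_real_derivative
              (vv N \<delta> s * dv N \<delta> t) * \<phi> (v2 s t) + P 2 (v2 s t) * (vv N \<delta> s * vv N \<delta> t)) (at t)"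
          by (rule DERIV_mult[OF DERIV_cmult[OF vv_deriv] line_deriv2[OF dphi]])
        then show ?thesis unfolding H_def F_def i2 by (simp add: ff_def GG_comp algebra_simps)
      qed
      then have "((\<lambda>t. F (v2 s t)) has_integral H 1 - H 0) {0..1}"
        by (intro ftc_real) auto
      moreover have "H 1 - H 0 = 0" by (simp add: H_def vv10 phi2)
      ultimately show "integral {0..1} (\<lambda>t. F (v2 s t)) = 0" by (simp add: integral_unique)
    qed
  qed
  moreover have "tint F = tint (\<lambda>y. ff y * P i y) + tint (\<lambda>y. GG y $ i * \<phi> y)"
    unfolding F_def using Pc phic GG_comp_cont ff_cont GG_cont by (intro tint_add continuous_intros) auto
  ultimately show "tint (\<lambda>y. ff y * P i y) = - tint (\<lambda>y. GG y $ i * \<phi> y)" by simp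
qed

lemma W1inf_ff: "W1inf ff GG"
  unfolding W1inf_def
  using ff_periodic GG_periodic meas_cont[OF ff_cont] GG_cont ff_ess GG_ess weak_grad
  by (auto intro: meas_cont)

end

lemma tdist_lt:
  assumes "0 < r"
  shows "tdist x y < r \<longleftrightarrow> (\<exists>k::real^2. (\<forall>i. k$i \<in> \<int>) \<and> norm (x - y - k) < r)"
proof -
  let ?S = "{norm (x - y - k) | k :: real^2. \<forall>i. k $ i \<in> \<int>}"
  have ne: "?S \<noteq> {}" by (auto intro!: exI[of _ 0])
  have bb: "bdd_below ?S" by (rule bdd_belowI[of _ 0]) auto
  show ?thesis unfolding tdist_def cInf_less_iff[OF ne bb] by blast
qed

lemma lebesgue_open: "open S \<Longrightarrow> S \<in> sets lebesgue"
  by (metis borel_open sets_completionI_sets sets_lborel)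

lemma lebesgue_closed: "closed S \<Longrightarrow> S \<in> sets lebesgue"
  by (metis borel_closed sets_completionI_sets sets_lborel)

lemma tball_eq:
  assumes "0 < r"
  shows "tball x r = cell \<inter> (\<Union>k\<in>{k::real^2. \<forall>i. k$i \<in> \<int>}. ball (x - k) r)"
proof -
  have "norm (x - y - k) = dist (x - k) y" for y k :: "real^2"
    by (simp add: dist_norm algebra_simps)
  then show ?thesis
    unfolding tball_def using tdist_lt[OF assms] by auto
qed

lemma tball_sets:
  assumes "0 < r"
  shows "tball x r \<in> sets lebesgue"
proof -
  have o: "open (\<Union>k\<in>{k::real^2. \<forall>i. k$i \<in> \<int>}. ball (x - k) r)" by auto
  have c: "closed cell" unfolding cell_def by (rule closed_cbox)
  show ?thesis unfolding tball_eq[OF assms]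
    by (rule sets.Int[OF lebesgue_closed[OF c] lebesgue_open[OF o]])
qed

lemma tball_sub: "tball x r \<subseteq> cell"
  by (auto simp: tball_def)

definition Qsq :: "real^2 \<Rightarrow> real \<Rightarrow> int \<Rightarrow> int \<Rightarrow> (real^2) set" where
  "Qsq x r i j = cbox (x - v2 (of_int i) (of_int j) - r *\<^sub>R One) (x - v2 (of_int i) (of_int j) + r *\<^sub>R One)"

lemma int_comp_floor:
  fixes x yc kc r :: real
  assumes "\<bar>x - yc - of_int z\<bar> < r" "0 \<le> yc" "yc \<le> 1" "r < 1"
  shows "z \<in> {\<lfloor>x\<rfloor> - 1..\<lfloor>x\<rfloor> + 1}"
proof -
  have a: "of_int z < x + 1" "of_int z > x - 2" using assms by auto
  have "z - 1 \<le> \<lfloor>x\<rfloor>" using a(1) by (simp add: le_floor_iff)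
  moreover have "\<lfloor>x\<rfloor> < z + 2" using a(2) by (simp add: floor_less_iff)
  ultimately show ?thesis by auto
qed

lemma ball_cover:
  assumes y: "y \<in> tball x r" and r: "0 < r" "r < 1"
  shows "\<exists>i\<in>{\<lfloor>x$1\<rfloor> - 1..\<lfloor>x$1\<rfloor> + 1}. \<exists>j\<in>{\<lfloor>x$2\<rfloor> - 1..\<lfloor>x$2\<rfloor> + 1}. y \<in> Qsq x r i j"
proof -
  from y have yc: "y \<in> cell" and "tdist x y < r" by (auto simp: tball_def)
  then obtain k :: "real^2" where k: "\<forall>i. k$i \<in> \<int>" and n: "norm (x - y - k) < r"
    using tdist_lt[OF r(1)] by blast
  obtain z1 where z1: "k$1 = of_int z1" using k by (meson Ints_cases)
  obtain z2 where z2: "k$2 = of_int z2" using k by (meson Ints_cases)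
  have c: "\<bar>x$c - y$c - k$c\<bar> < r" for c
    using component_le_norm_cart[of "x - y - k" c] n by simp
  have y01': "(0::real^2)$c \<le> y$c \<and> y$c \<le> (One::real^2)$c" for c
    using yc unfolding cell_def mem_box_cart by blast
  have y01: "0 \<le> y$c" "y$c \<le> 1" for c using y01'[of c] unfolding One2 zero_index by auto
  have i: "z1 \<in> {\<lfloor>x$1\<rfloor> - 1..\<lfloor>x$1\<rfloor> + 1}"
    by (rule int_comp_floor[of _ "y$1"]) (use c[of 1] z1 y01 r in auto)
  have j: "z2 \<in> {\<lfloor>x$2\<rfloor> - 1..\<lfloor>x$2\<rfloor> + 1}"
    by (rule int_comp_floor[of _ "y$2"]) (use c[of 2] z2 y01 r in auto)
  have kk: "k = v2 (of_int z1) (of_int z2)" using v2_eta[of k] z1 z2 by simp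
  have "y \<in> Qsq x r z1 z2"
    unfolding Qsq_def mem_box_cart kk[symmetric]
  proof
    fix c :: 2
    show "(x - k - r *\<^sub>R One) $ c \<le> y $ c \<and> y $ c \<le> (x - k + r *\<^sub>R One) $ c"
      using c[of c] unfolding vector_add_component vector_minus_component vector_scaleR_component One2 by auto
  qed
  then show ?thesis using i j by blast
qed

context seqpar begin

lemma absvv_cont: "continuous_on UNIV (\<lambda>t. \<bar>vv N \<delta> t\<bar>)"
  by (intro continuous_intros vv_cont)

lemma sq_bound:
  assumes b: "0 < \<beta>" "\<beta> < 1" and p: "(\<delta>/N) powr \<beta> = 1/N" and r: "0 < r" "r \<le> 1"
  shows "integral (Qsq x r i j) (\<lambda>y. \<bar>ff y\<bar>) \<le> 36 * (2*r) powr (2*\<beta>)"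
proof -
  define k where "k = v2 (of_int i) (of_int j)"
  define a where "a = x - k - r *\<^sub>R One"
  define c where "c = x - k + r *\<^sub>R One"
  have Q: "Qsq x r i j = cbox a c" by (simp add: Qsq_def a_def c_def k_def)
  have ac: "a$l \<le> c$l" "c$l - a$l = 2*r" for l
    unfolding a_def c_def vector_add_component vector_minus_component vector_scaleR_component One2
    using r by auto
  have eq: "(\<lambda>y. \<bar>ff y\<bar>) = (\<lambda>y::real^2. \<bar>vv N \<delta> (y$1)\<bar> * \<bar>vv N \<delta> (y$2)\<bar>)"
    by (simp add: ff_def abs_mult)
  have "integral (Qsq x r i j) (\<lambda>y. \<bar>ff y\<bar>) =
        integral {a$1..c$1} (\<lambda>t. \<bar>vv N \<delta> t\<bar>) * integral {a$2..c$2} (\<lambda>t. \<bar>vv N \<delta> t\<bar>)"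
    unfolding Q eq by (rule integral_cart2_prod[OF absvv_cont absvv_cont])
  also have "\<dots> \<le> (6 * (2*r) powr \<beta>) * (6 * (2*r) powr \<beta>)"
  proof (rule mult_mono)
    show "integral {a$1..c$1} (\<lambda>t. \<bar>vv N \<delta> t\<bar>) \<le> 6 * (2*r) powr \<beta>"
      using vv_holder[OF b p ac(1)[of 1]] ac(2)[of 1] r by simp
    show "integral {a$2..c$2} (\<lambda>t. \<bar>vv N \<delta> t\<bar>) \<le> 6 * (2*r) powr \<beta>"
      using vv_holder[OF b p ac(1)[of 2]] ac(2)[of 2] r by simp
    show "0 \<le> 6 * (2*r) powr \<beta>" by simp
    show "0 \<le> integral {a$2..c$2} (\<lambda>t. \<bar>vv N \<delta> t\<bar>)"
      by (rule Henstock_Kurzweil_Integration.integral_nonneg)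
         (auto intro!: integrable_continuous_real continuous_on_subset[OF absvv_cont])
  qed
  also have "\<dots> = 36 * ((2*r) powr \<beta> * (2*r) powr \<beta>)" by simp
  also have "\<dots> = 36 * (2*r) powr (2*\<beta>)" by (simp add: powr_add[symmetric])
  finally show ?thesis .
qed

lemma ball_int:
  assumes b: "0 < \<beta>" "\<beta> < 1" and p: "(\<delta>/N) powr \<beta> = 1/N" and r: "0 < r" "r < 1"
  shows "integral\<^sup>L (lebesgue_on (tball x r)) (\<lambda>y. \<bar>ff y\<bar>) \<le> 9 * (36 * (2*r) powr (2*\<beta>))"
proof -
  let ?T = "tball x r"
  let ?g = "\<lambda>y. \<bar>ff y\<bar>"
  let ?D = "{\<lfloor>x$1\<rfloor> - 1..\<lfloor>x$1\<rfloor> + 1} \<times> {\<lfloor>x$2\<rfloor> - 1..\<lfloor>x$2\<rfloor> + 1}"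
  have Tm: "?T \<in> sets lebesgue" by (rule tball_sets[OF r(1)])
  have gc: "continuous_on UNIV ?g" by (intro continuous_intros ff_cont)
  have ai_cell: "?g absolutely_integrable_on cell"
    unfolding cell_def by (rule absolutely_integrable_continuous) (rule continuous_on_subset[OF gc], simp)
  have ai: "?g absolutely_integrable_on ?T"
    by (rule set_integrable_subset[OF ai_cell Tm tball_sub])
  have intT: "integrable (lebesgue_on ?T) ?g"
    by (rule absolutely_integrable_imp_integrable[OF ai Tm])
  have hkT: "?g integrable_on ?T" by (rule integrable_on_lebesgue_on[OF intT Tm])
  have eqL: "integral\<^sup>L (lebesgue_on ?T) ?g = integral ?T ?g"
    by (rule lebesgue_integral_eq_integral[OF intT Tm])
  have intQ: "?g integrable_on Qsq x r i j" for i j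
    unfolding Qsq_def by (rule integrable_continuous) (rule continuous_on_subset[OF gc], simp)
  have finD: "finite ?D" by simp
  have "integral ?T ?g = integral UNIV (\<lambda>y. if y \<in> ?T then ?g y else 0)"
    by (simp add: integral_restrict_UNIV)
  also have "\<dots> \<le> integral UNIV (\<lambda>y. \<Sum>z\<in>?D. if y \<in> Qsq x r (fst z) (snd z) then ?g y else 0)"
  proof (rule Henstock_Kurzweil_Integration.integral_le)
    show "(\<lambda>y. if y \<in> ?T then ?g y else 0) integrable_on UNIV"
      using hkT by (simp add: integrable_restrict_UNIV)
    show "(\<lambda>y. \<Sum>z\<in>?D. if y \<in> Qsq x r (fst z) (snd z) then ?g y else 0) integrable_on UNIV"
      by (rule integrable_sum[OF finD]) (use intQ in \<open>simp add: integrable_restrict_UNIV\<close>)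
    fix y :: "real^2"
    show "(if y \<in> ?T then ?g y else 0) \<le> (\<Sum>z\<in>?D. if y \<in> Qsq x r (fst z) (snd z) then ?g y else 0)"
    proof (cases "y \<in> ?T")
      case True
      then obtain i j where ij: "(i, j) \<in> ?D" "y \<in> Qsq x r i j"
        using ball_cover[OF _ r] by blast
      have "?g y = (if y \<in> Qsq x r (fst (i,j)) (snd (i,j)) then ?g y else 0)" using ij by simp
      also have "\<dots> \<le> (\<Sum>z\<in>?D. if y \<in> Qsq x r (fst z) (snd z) then ?g y else 0)"
        by (rule member_le_sum[OF ij(1)]) auto
      finally show ?thesis using True by simp
    next
      case False
      then show ?thesis by (simp add: sum_nonneg)
    qed
  qed
  also have "\<dots> = (\<Sum>z\<in>?D. integral UNIV (\<lambda>y. if y \<in> Qsq x r (fst z) (snd z) then ?g y else 0))"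
    by (rule integral_sum[OF finD]) (use intQ in \<open>simp add: integrable_restrict_UNIV\<close>)
  also have "\<dots> = (\<Sum>z\<in>?D. integral (Qsq x r (fst z) (snd z)) ?g)"
    by (simp add: integral_restrict_UNIV)
  also have "\<dots> \<le> of_nat (card ?D) * (36 * (2*r) powr (2*\<beta>))"
    by (rule sum_bounded_above) (use sq_bound[OF b p r(1)] r in auto)
  also have "\<dots> = 9 * (36 * (2*r) powr (2*\<beta>))" by simp
  finally show ?thesis using eqL by simp
qed

end

lemma S_const:
  fixes N \<delta> A B p :: real
  assumes "N > 0" "\<delta> > 0" "A > 0" "B > 0" "\<delta> powr p * N = \<delta>^2"
  shows "(A/\<delta>) powr p / sqrt (2 * (N^2 * B / \<delta>^3) * (A/\<delta>)) = A powr p / sqrt (2*A*B)"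
proof -
  have e1: "2 * (N^2 * B / \<delta>^3) * (A/\<delta>) = (N/\<delta>^2)^2 * (2*A*B)"
    using assms by (simp add: field_simps power2_eq_square power3_eq_cube)
  have e2: "sqrt ((N/\<delta>^2)^2 * (2*A*B)) = (N/\<delta>^2) * sqrt (2*A*B)"
    using assms by (simp add: real_sqrt_mult)
  have e3: "(A/\<delta>) powr p = A powr p / \<delta> powr p"
    using assms by (simp add: powr_divide)
  have pos: "sqrt (2*A*B) > 0" "\<delta> powr p > 0" using assms by auto
  have "(A/\<delta>) powr p / sqrt (2 * (N^2 * B / \<delta>^3) * (A/\<delta>)) = A powr p / ((\<delta> powr p * N) / \<delta>^2 * sqrt (2*A*B))"
    unfolding e1 e2 e3 using assms pos by (simp add: field_simps)
  also have "\<dots> = A powr p / sqrt (2*A*B)" using assms by (simp add: assms(5))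
  finally show ?thesis .
qed

lemma L1_bound:
  assumes sp: "seqpar m \<delta>" and b: "0 < \<beta>" "\<beta> < 1" and p: "(\<delta>/real m) powr \<beta> = 1/real m"
  shows "L1norm (seqpar.ff m \<delta>) \<le> 36"
proof -
  interpret seqpar m \<delta> by (rule sp)
  have "L1norm ff = tint (\<lambda>y. \<bar>vv N \<delta> (y$1)\<bar> * \<bar>vv N \<delta> (y$2)\<bar>)"
    by (simp add: L1norm_def ff_def abs_mult)
  also have "\<dots> = integral {0..1} (\<lambda>t. \<bar>vv N \<delta> t\<bar>) * integral {0..1} (\<lambda>t. \<bar>vv N \<delta> t\<bar>)"
    by (rule tint_prod[OF absvv_cont absvv_cont])
  also have "\<dots> \<le> 6 * 6"
  proof -
    have h: "integral {0..1} (\<lambda>t. \<bar>vv N \<delta> t\<bar>) \<le> 6"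
      using vv_holder[OF b p, of 0 1] by simp
    have h0: "0 \<le> integral {0..1} (\<lambda>t. \<bar>vv N \<delta> t\<bar>)"
      by (rule Henstock_Kurzweil_Integration.integral_nonneg)
         (auto intro!: integrable_continuous_real continuous_on_subset[OF absvv_cont])
    show ?thesis by (rule mult_mono[OF h h]) (use h0 in auto)
  qed
  finally show ?thesis by simp
qed

lemma maxint_bound:
  assumes sp: "seqpar m \<delta>" and b: "0 < \<beta>" "\<beta> < 1" and p: "(\<delta>/real m) powr \<beta> = 1/real m"
    and r: "0 < r" "r < 1"
  shows "maxint (seqpar.ff m \<delta>) r \<le> 1296 * r powr (2*\<beta>)"
proof -
  interpret seqpar m \<delta> by (rule sp)
  have "(2*r) powr (2*\<beta>) = 2 powr (2*\<beta>) * r powr (2*\<beta>)" using r by (simp add: powr_mult)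
  moreover have "2 powr (2*\<beta>) \<le> 2 powr 2" using b by (intro powr_mono) auto
  ultimately have t: "(2*r) powr (2*\<beta>) \<le> 4 * r powr (2*\<beta>)"
    by (simp add: mult_right_mono)
  have each: "integral\<^sup>L (lebesgue_on (tball x r)) (\<lambda>y. \<bar>ff y\<bar>) \<le> 1296 * r powr (2*\<beta>)" for x
  proof -
    have "integral\<^sup>L (lebesgue_on (tball x r)) (\<lambda>y. \<bar>ff y\<bar>) \<le> 9 * (36 * (2*r) powr (2*\<beta>))"
      by (rule ball_int[OF b p r])
    also have "\<dots> \<le> 9 * (36 * (4 * r powr (2*\<beta>)))" using t by simp
    finally show ?thesis by simp
  qed
  show ?thesis unfolding maxint_def
    by (rule cSUP_least) (use each in auto)
qed

lemma exp_id: fixes \<alpha> :: real assumes "0 < \<alpha>" "\<alpha> < 2"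
  shows "(-(2-\<alpha>)/\<alpha>) * ((4 - \<alpha>) / (2 - \<alpha>)) + 1 = 2 * (-(2-\<alpha>)/\<alpha>)"
proof -
  have a: "\<alpha> \<noteq> 0" "2 - \<alpha> \<noteq> 0" using assms by auto
  show ?thesis using a by (simp add: field_simps)
qed

lemma powr_twice: fixes N e :: real assumes "N > 0" shows "N powr (2 * e) = (N powr e)^2"
proof -
  have "N powr (2 * e) = N powr (e + e)" by simp
  also have "\<dots> = N powr e * N powr e" by (rule powr_add)
  finally show ?thesis by (simp add: power2_eq_square)
qed

theorem proposition2p4:
  fixes \<alpha> :: real
  assumes "0 < \<alpha>" and "\<alpha> < 2"
  shows "\<exists>(f :: nat \<Rightarrow> real^2 \<Rightarrow> real) (G :: nat \<Rightarrow> real^2 \<Rightarrow> real^2) C.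
     (\<forall>n\<ge>1. W1inf (f n) (G n) \<and> tint (f n) = 0) \<and>
     bdd_above {L1norm (f n) | n. n \<ge> 1} \<and>
     C > 0 \<and>
     (\<forall>r. 0 < r \<and> r < 1 \<longrightarrow> (\<forall>n\<ge>1. maxint (f n) r \<le> C * r powr \<alpha>)) \<and>
     filterlim (\<lambda>n. L2norm (f n)) at_top sequentially \<and>
     (let S = (\<lambda>n. L2norm (f n) powr ((4 - \<alpha>) / (2 - \<alpha>)) / L2norm_vec (G n)) in
        0 < liminf (\<lambda>n. ereal (S n)) \<and> limsup (\<lambda>n. ereal (S n)) < \<infinity>)"
proof -
  define \<beta> where "\<beta> = \<alpha>/2"
  have b: "0 < \<beta>" "\<beta> < 1" using assms by (auto simp: \<beta>_def)
  define e where "e = -(2-\<alpha>)/\<alpha>"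
  have e0: "e < 0" using assms by (simp add: e_def divide_neg_pos)
  define dl where "dl n = real (n+2) powr e" for n :: nat
  have dl0: "0 < dl n" for n by (simp add: dl_def)
  have dl1: "dl n < 1" for n unfolding dl_def by (rule powr_less_one) (use e0 in auto)
  have sp: "seqpar (n+2) (dl n)" for n by unfold_locales (use dl0 dl1 in auto)
  have pb: "(dl n / real (n+2)) powr \<beta> = 1 / real (n+2)" for n
  proof -
    have Np: "real (n+2) > 0" by simp
    have "dl n / real (n+2) = real (n+2) powr (e - 1)"
      unfolding dl_def using Np by (simp add: powr_diff)
    then have "(dl n / real (n+2)) powr \<beta> = real (n+2) powr ((e - 1) * \<beta>)"
      by (simp add: powr_powr)
    also have "(e - 1) * \<beta> = -1" using assms by (simp add: e_def \<beta>_def field_simps)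
    finally show ?thesis using Np by (simp add: powr_minus_divide)
  qed
  define f :: "nat \<Rightarrow> real^2 \<Rightarrow> real" where "f n = seqpar.ff (n+2) (dl n)" for n
  define G :: "nat \<Rightarrow> real^2 \<Rightarrow> real^2" where "G n = seqpar.GG (n+2) (dl n)" for n
  define p where "p = (4 - \<alpha>) / (2 - \<alpha>)"
  define A where "A = integral {0..1} (\<lambda>s. (bpsi s)^2)"
  define B where "B = integral {0..1} (\<lambda>s. (bdpsi s)^2)"
  have Ap: "A > 0" using A2_pos by (simp add: A_def)
  have Bp: "B > 0" using B2_pos by (simp add: B_def)
  define K where "K = A powr p / sqrt (2*A*B)"
  have Kp: "K > 0" using Ap Bp by (simp add: K_def)
  have L2f: "L2norm (f n) = A / dl n" for n
  proof -
    interpret seqpar "n+2" "dl n" by (rule sp)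
    show ?thesis unfolding f_def L2norm_ff by (simp add: A2_def A_def)
  qed
  have Sn: "L2norm (f n) powr p / L2norm_vec (G n) = K" for n
  proof -
    interpret seqpar "n+2" "dl n" by (rule sp)
    have Np: "real (n+2) > 0" by simp
    have key: "dl n powr p * real (n+2) = (dl n)^2"
    proof -
      have "dl n powr p * real (n+2) = real (n+2) powr (e * p) * real (n+2) powr 1"
        unfolding dl_def using Np by (simp add: powr_powr)
      also have "\<dots> = real (n+2) powr (e * p + 1)" by (rule powr_add[symmetric])
      also have "e * p + 1 = 2 * e" unfolding e_def p_def by (rule exp_id[OF assms])
      also have "real (n+2) powr (2 * e) = (real (n+2) powr e)^2" by (rule powr_twice[OF Np])
      finally show ?thesis by (simp add: dl_def)
    qed
    have "L2norm (f n) powr p / L2norm_vec (G n)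
        = (A / dl n) powr p / sqrt (2 * (real (n+2)^2 * B / (dl n)^3) * (A / dl n))"
      unfolding L2f unfolding G_def L2norm_GG by (simp add: A2_def A_def B2_def B_def)
    also have "\<dots> = K" unfolding K_def
      by (rule S_const[OF Np dl0 Ap Bp key])
    finally show ?thesis .
  qed
  show ?thesis
  proof (intro exI[of _ f] exI[of _ G] exI[of _ "1296::real"] conjI)
    show "\<forall>n\<ge>1. W1inf (f n) (G n) \<and> tint (f n) = 0"
    proof (intro allI impI conjI)
      fix n :: nat
      interpret seqpar "n+2" "dl n" by (rule sp)
      show "W1inf (f n) (G n)" unfolding f_def G_def by (rule W1inf_ff)
      show "tint (f n) = 0" unfolding f_def by (rule tint_ff)
    qed
    show "bdd_above {L1norm (f n) | n. n \<ge> 1}"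
      by (rule bdd_aboveI[of _ 36]) (use L1_bound[OF sp b pb] in \<open>auto simp: f_def\<close>)
    show "(0::real) < 1296" by simp
    show "\<forall>r. 0 < r \<and> r < 1 \<longrightarrow> (\<forall>n\<ge>1. maxint (f n) r \<le> 1296 * r powr \<alpha>)"
    proof (intro allI impI)
      fix r :: real and n :: nat
      assume r: "0 < r \<and> r < 1"
      have "maxint (f n) r \<le> 1296 * r powr (2*\<beta>)"
        unfolding f_def using r by (intro maxint_bound[OF sp b pb]) auto
      then show "maxint (f n) r \<le> 1296 * r powr \<alpha>" by (simp add: \<beta>_def)
    qed
    show "filterlim (\<lambda>n. L2norm (f n)) at_top sequentially"
    proof -
      have lim1: "filterlim (\<lambda>n::nat. 2 + real n) at_top sequentially"
        by (rule filterlim_tendsto_add_at_top[OF tendsto_const filterlim_real_sequentially])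
      have lim2: "filterlim (\<lambda>n::nat. (2 + real n) powr (-e)) at_top sequentially"
        by (rule filterlim_compose[OF real_powr_at_top lim1]) (use e0 in simp)
      have lim3: "filterlim (\<lambda>n::nat. A * (2 + real n) powr (-e)) at_top sequentially"
        by (rule filterlim_tendsto_pos_mult_at_top[OF tendsto_const Ap lim2])
      have "L2norm (f n) = A * (2 + real n) powr (-e)" for n
        unfolding L2f dl_def by (simp add: powr_minus divide_inverse add.commute)
      then show ?thesis using lim3 by simp
    qed
    show "let S = (\<lambda>n. L2norm (f n) powr ((4 - \<alpha>) / (2 - \<alpha>)) / L2norm_vec (G n)) in
        0 < liminf (\<lambda>n. ereal (S n)) \<and> limsup (\<lambda>n. ereal (S n)) < \<infinity>"
    proof -
      have "(\<lambda>n. ereal (L2norm (f n) powr ((4 - \<alpha>) / (2 - \<alpha>)) / L2norm_vec (G n))) = (\<lambda>n. ereal K)"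
        using Sn by (simp add: p_def)
      then show ?thesis using Kp by (simp add: Let_def Liminf_const Limsup_const)
    qed
  qed
qed

end
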